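(* Let $\Sigma=\{xtyxsy\approx xtxyxsy,\ xtysyx\approx xtysxyx\}$ and let $M$ be a monoid such that $xy$ is an isoterm for $M$ and $M$ satisfies $\Sigma$. Then for every identity $\mathbf u\approx\mathbf v$ of $M$ there is a compact well-balanced identity $\sigma$ of $M$ such that $\mathbf u\approx\mathbf v$ is a consequence of $\{\sigma\}\cup\Sigma\cup\Gamma(M)$.
   Context: Words are elements of the free monoid over a countably infinite alphabet. A word $\mathbf w$ is an isoterm for $M$ if $M$ satisfies no identity $\mathbf w\approx\mathbf w'$ with $\mathbf w'\ne\mathbf w$. A letter is simple in $\mathbf w$ if it occurs once, multiple if it occurs at least twice; $\mathrm{simp}(\mathbf w)$, $\mathrm{mul}(\mathbf w)$ denote these sets. For a set $X$ of letters, $\mathbf w(X)$ is obtained from $\mathbf w$ by deleting all letters not in $X$; $\mathbf w(x,X)=\mathbf w(X\cup\{x\})$. A block of $\mathbf w$ is a maximal subword containing no letter simple in $\mathbf w$. If $\mathbf u(\mathrm{simp}(\mathbf u))=\mathbf v(\mathrm{simp}(\mathbf v))$, the $i$-th block of $\mathbf u$ and the $i$-th block of $\mathbf v$ (counted between consecutive simple letters, including possibly empty ones) are called corresponding. An identity $\mathbf u\approx\mathbf v$ with $\mathbf u(\mathrm{simp}(\mathbf u))=\mathbf v(\mathrm{simp}(\mathbf v))$ is well-balanced if $\mathbf u(x,\mathrm{simp}(\mathbf u))=\mathbf v(x,\mathrm{simp}(\mathbf u))$ for every $x\in\mathrm{mul}(\mathbf u)$. A word $\mathbf u$ is $x$-compact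 (for $x\in\mathrm{mul}(\mathbf u)$) if the block containing the first occurrence of $x$ contains at most two occurrences of $x$ and every other block contains at most one occurrence of $x$; $\mathbf u$ is compact if it is $x$-compact for all $x\in\mathrm{mul}(\mathbf u)$. An identity $\mathbf u\approx\mathbf v$ is compact if $\mathbf u,\mathbf v$ are compact and $\mathbf u(\mathrm{simp}(\mathbf u))=\mathbf v(\mathrm{simp}(\mathbf v))$. A word is almost-linear if it contains at most one multiple letter; $\Gamma(M)$ is the set of all identities of $M$ both sides of which are almost-linear. *)

theory Defs
  imports Main
begin

type_synonym word = "nat list"
type_synonym identity = "word \<times> word"

definition eval_word :: "(nat \<Rightarrow> 'm::monoid_mult) \<Rightarrow> word \<Rightarrow> 'm" where
  "eval_word h w = prod_list (map h w)"

definition holds :: "'m::monoid_mult itself \<Rightarrow> word \<Rightarrow> word \<Rightarrow> bool" where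
  "holds M u v \<longleftrightarrow> (\<forall>h :: nat \<Rightarrow> 'm. eval_word h u = eval_word h v)"

definition isoterm :: "'m::monoid_mult itself \<Rightarrow> word \<Rightarrow> bool" where
  "isoterm M w \<longleftrightarrow> (\<forall>w'. holds M w w' \<longrightarrow> w' = w)"

definition simp_letters :: "word \<Rightarrow> nat set" where
  "simp_letters w = {x. count_list w x = 1}"

definition mul_letters :: "word \<Rightarrow> nat set" where
  "mul_letters w = {x. 2 \<le> count_list w x}"

definition restr :: "word \<Rightarrow> nat set \<Rightarrow> word" where
  "restr w X = filter (\<lambda>a. a \<in> X) w"

text \<open>Splitting a word at the letters of S (the separators are dropped);
  k separators give k+1 (possibly empty) pieces.\<close>
fun split_at_letters :: "nat set \<Rightarrow> word \<Rightarrow> word list" where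
  "split_at_letters S [] = [[]]"
| "split_at_letters S (a # w) =
     (if a \<in> S then [] # split_at_letters S w
      else (case split_at_letters S w of
              [] \<Rightarrow> [[a]]
            | b # bs \<Rightarrow> (a # b) # bs))"

text \<open>The blocks of w, in order, counted between consecutive simple letters
  (including possibly empty ones).\<close>
definition blocks :: "word \<Rightarrow> word list" where
  "blocks w = split_at_letters (simp_letters w) w"

definition x_compact :: "word \<Rightarrow> nat \<Rightarrow> bool" where
  "x_compact w x \<longleftrightarrow>
     (let bs = blocks w; i = (LEAST i. i < length bs \<and> x \<in> set (bs ! i))
      in \<forall>j < length bs. count_list (bs ! j) x \<le> (if j = i then 2 else 1))"

definition compact :: "word \<Rightarrow> bool" where
  "compact w \<longleftrightarrow> (\<forall>x \<in> mul_letters w. x_compact w x)"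

definition compact_id :: "identity \<Rightarrow> bool" where
  "compact_id \<sigma> \<longleftrightarrow> compact (fst \<sigma>) \<and> compact (snd \<sigma>) \<and>
     restr (fst \<sigma>) (simp_letters (fst \<sigma>)) = restr (snd \<sigma>) (simp_letters (snd \<sigma>))"

definition well_balanced :: "identity \<Rightarrow> bool" where
  "well_balanced \<sigma> \<longleftrightarrow>
     (let u = fst \<sigma>; v = snd \<sigma> in
      restr u (simp_letters u) = restr v (simp_letters v) \<and>
      (\<forall>x \<in> mul_letters u. restr u (insert x (simp_letters u)) = restr v (insert x (simp_letters u))))"

definition almost_linear :: "word \<Rightarrow> bool" where
  "almost_linear w \<longleftrightarrow> card (mul_letters w) \<le> 1"

definition Gamma :: "'m::monoid_mult itself \<Rightarrow> identity set" where
  "Gamma M = {(u, v). holds M u v \<and> almost_linear u \<and> almost_linear v}"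

definition subst :: "(nat \<Rightarrow> word) \<Rightarrow> word \<Rightarrow> word" where
  "subst \<theta> w = concat (map \<theta> w)"

inductive derives :: "identity set \<Rightarrow> word \<Rightarrow> word \<Rightarrow> bool" for \<Sigma> where
  step: "(s, t) \<in> \<Sigma> \<Longrightarrow> derives \<Sigma> (a @ subst \<theta> s @ b) (a @ subst \<theta> t @ b)"
| refl: "derives \<Sigma> u u"
| sym: "derives \<Sigma> u v \<Longrightarrow> derives \<Sigma> v u"
| trans: "derives \<Sigma> u v \<Longrightarrow> derives \<Sigma> v w \<Longrightarrow> derives \<Sigma> u w"

text \<open>Sigma with letters x = 0, y = 1, t = 2, s = 3:
  xtyxsy = xtxyxsy and xtysyx = xtysxyx.\<close>
definition Sigma0 :: "identity set" where
  "Sigma0 = {([0,2,1,0,3,1], [0,2,0,1,0,3,1]), ([0,2,1,3,1,0], [0,2,1,3,0,1,0])}"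

end

theory Submission
  imports Defs
begin



lemma eval_append[simp]: "eval_word h (a @ b) = eval_word h a * eval_word h b"
  by (simp add: eval_word_def)
lemma eval_Nil[simp]: "eval_word h [] = 1" by (simp add: eval_word_def)
lemma eval_Cons[simp]: "eval_word h (a # w) = h a * eval_word h w" by (simp add: eval_word_def)

lemma subst_append[simp]: "subst \<theta> (a @ b) = subst \<theta> a @ subst \<theta> b"
  by (simp add: subst_def)
lemma subst_Nil[simp]: "subst \<theta> [] = []" by (simp add: subst_def)
lemma subst_Cons[simp]: "subst \<theta> (a # w) = \<theta> a @ subst \<theta> w" by (simp add: subst_def)

lemma eval_subst: "eval_word h (subst \<theta> w) = eval_word (\<lambda>n. eval_word h (\<theta> n)) w"
  by (induction w) auto

lemma holds_subst: "holds M u v \<Longrightarrow> holds M (subst \<theta> u) (subst \<theta> v)"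
  unfolding holds_def by (simp add: eval_subst)

lemma holds_ctx: "holds M u v \<Longrightarrow> holds M (a @ u @ b) (a @ v @ b)"
  unfolding holds_def by simp

lemma holds_sym: "holds M u v \<Longrightarrow> holds M v u"
  unfolding holds_def by simp
lemma holds_trans: "holds M u v \<Longrightarrow> holds M v w \<Longrightarrow> holds M u w"
  unfolding holds_def by simp
lemma holds_refl: "holds M u u"
  unfolding holds_def by simp

lemma derives_sound:
  assumes "derives E u v" and "\<forall>(s,t)\<in>E. holds M s t"
  shows "holds M u v"
  using assms(1)
proof induction
  case (step s t a \<theta> b)
  then have "holds M s t" using assms(2) by auto
  then show ?case by (intro holds_ctx holds_subst)
qed (auto intro: holds_refl holds_sym holds_trans)

lemma derives_mono: "derives E u v \<Longrightarrow> E \<subseteq> E' \<Longrightarrow> derives E' u v"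
  by (induction rule: derives.induct) (auto intro: derives.intros)

lemma derives_ctx: "derives E u v \<Longrightarrow> derives E (a @ u @ b) (a @ v @ b)"
proof (induction rule: derives.induct)
  case (step s t a' \<theta> b')
  then show ?case using derives.step[of s t E "a @ a'" \<theta> "b' @ b"] by simp
qed (auto intro: derives.intros)

lemma subst_id: "subst (\<lambda>n. [n]) w = w"
  by (induction w) auto

lemma derives_id: "(s,t) \<in> E \<Longrightarrow> derives E s t"
  using derives.step[of s t E "[]" "\<lambda>n. [n]" "[]"] by (simp add: subst_id)

lemma derives_inst: "(s,t) \<in> E \<Longrightarrow> u = a @ subst \<theta> s @ b \<Longrightarrow> v = a @ subst \<theta> t @ b \<Longrightarrow> derives E u v"
  using derives.step by blast




lemma subst_single_count:
  "subst (\<lambda>n. if n = x then [c] else []) w = replicate (count_list w x) c"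
  by (induction w) auto

lemma iso_eq: "isoterm M w \<Longrightarrow> holds M w w' \<Longrightarrow> w' = w"
  unfolding isoterm_def by blast

lemma iso_rep:
  assumes iso: "isoterm M [0,1]" and h: "holds M (replicate k 0) (replicate l 0)"
    and k: "k = 0 \<or> k = 1"
  shows "k = l"
proof (cases "k = 0")
  case True
  have h2: "holds M ([0] @ replicate k 0 @ [1]) ([0] @ replicate l 0 @ [1])"
    using holds_ctx[OF h] .
  then have "holds M [0,1] ([0] @ replicate l 0 @ [1])" using True by simp
  then have e: "[0] @ replicate l 0 @ [1] = [0::nat,1]" by (rule iso_eq[OF iso])
  then have "l = 0" by (cases l) auto
  then show ?thesis using True by simp
next
  case False
  then have k1: "k = 1" using k by simp
  have h3: "holds M ([] @ replicate k 0 @ [1]) ([] @ replicate l 0 @ [1])"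
    using holds_ctx[OF h] .
  then have "holds M [0,1] (replicate l 0 @ [1])" using k1 by simp
  then have e: "replicate l 0 @ [1] = [0::nat,1]" by (rule iso_eq[OF iso])
  then have "l = 1" by (cases l) auto
  then show ?thesis using k1 by simp
qed

lemma iso_count01:
  assumes iso: "isoterm M [0,1]" and h: "holds M u v"
    and k: "count_list u x = 0 \<or> count_list u x = 1"
  shows "count_list v x = count_list u x"
proof -
  have "holds M (replicate (count_list u x) 0) (replicate (count_list v x) 0)"
    using holds_subst[OF h, of "\<lambda>n. if n = x then [0] else []"]
    unfolding subst_single_count .
  from iso_rep[OF iso this k] show ?thesis by simp
qed

lemma iso_count01':
  assumes iso: "isoterm M [0,1]" and h: "holds M u v"
  shows "(count_list u x = 0 \<longleftrightarrow> count_list v x = 0) \<and> (count_list u x = 1 \<longleftrightarrow> count_list v x = 1)"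
proof -
  have a: "count_list u x = 0 \<or> count_list u x = 1 \<Longrightarrow> count_list v x = count_list u x"
    by (rule iso_count01[OF iso h])
  have b: "count_list v x = 0 \<or> count_list v x = 1 \<Longrightarrow> count_list u x = count_list v x"
    by (rule iso_count01[OF iso holds_sym[OF h]])
  show ?thesis
  proof (intro conjI iffI)
    assume "count_list u x = 0" then show "count_list v x = 0" using a by simp
  next
    assume "count_list v x = 0" then show "count_list u x = 0" using b by simp
  next
    assume "count_list u x = 1" then show "count_list v x = 1" using a by simp
  next
    assume "count_list v x = 1" then show "count_list u x = 1" using b by simp
  qed
qed

lemma iso_set: "isoterm M [0,1] \<Longrightarrow> holds M u v \<Longrightarrow> set u = set v"
proof -
  assume iso: "isoterm M [0,1]" and h: "holds M u v"
  have "\<And>x. (x \<in> set u) = (x \<in> set v)"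
  proof -
    fix x
    have "(count_list u x = 0) = (count_list v x = 0)" using iso_count01'[OF iso h, of x] by blast
    then show "(x \<in> set u) = (x \<in> set v)" by (simp add: count_list_0_iff)
  qed
  then show ?thesis by blast
qed

lemma iso_simp: "isoterm M [0,1] \<Longrightarrow> holds M u v \<Longrightarrow> simp_letters u = simp_letters v"
  unfolding simp_letters_def using iso_count01' by blast

lemma count_ge2_iff: "(2 \<le> count_list w x) \<longleftrightarrow> (x \<in> set w \<and> count_list w x \<noteq> 1)"
proof -
  have "x \<in> set w \<longleftrightarrow> count_list w x \<noteq> 0" by (simp add: count_list_0_iff)
  then show ?thesis by linarith
qed

lemma iso_mul: "isoterm M [0,1] \<Longrightarrow> holds M u v \<Longrightarrow> mul_letters u = mul_letters v"
proof -
  assume iso: "isoterm M [0,1]" and h: "holds M u v"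
  have "\<And>x. (2 \<le> count_list u x) = (2 \<le> count_list v x)"
  proof -
    fix x
    have "(count_list u x = 0) = (count_list v x = 0)" "(count_list u x = 1) = (count_list v x = 1)"
      using iso_count01'[OF iso h, of x] by blast+
    then show "(2 \<le> count_list u x) = (2 \<le> count_list v x)" by linarith
  qed
  then show ?thesis unfolding mul_letters_def by blast
qed

lemma distinct_pairs_eq:
  "distinct xs \<Longrightarrow> distinct ys \<Longrightarrow>
   (\<forall>a b. filter (\<lambda>c. c = a \<or> c = b) xs = filter (\<lambda>c. c = a \<or> c = b) ys) \<Longrightarrow> xs = ys"
proof (induction xs arbitrary: ys)
  case Nil
  have "\<forall>y. y \<notin> set ys"
  proof
    fix y
    have "filter (\<lambda>c. c = y \<or> c = y) ys = []" using Nil(3)[rule_format, of y y] by simp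
    then show "y \<notin> set ys" by (auto simp: filter_empty_conv)
  qed
  then show ?case by (cases ys) auto
next
  case (Cons a xs)
  have e0: "filter (\<lambda>c. c = a) xs = []" using Cons.prems(1) by (auto simp: filter_empty_conv)
  have fa: "filter (\<lambda>c. c = a \<or> c = a) ys = [a]" using Cons.prems(3)[rule_format, of a a] e0
    by simp
  then obtain b ys' where ys: "ys = b # ys'" by (cases ys) auto
  show ?case
  proof (cases "b = a")
    case True
    have "xs = ys'"
    proof (rule Cons.IH)
      show "distinct xs" using Cons.prems by simp
      show "distinct ys'" using Cons.prems ys by simp
      show "\<forall>c d. filter (\<lambda>e. e = c \<or> e = d) xs = filter (\<lambda>e. e = c \<or> e = d) ys'"
      proof (intro allI)
        fix c d
        have "filter (\<lambda>e. e = c \<or> e = d) (a # xs) = filter (\<lambda>e. e = c \<or> e = d) (a # ys')"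
          using Cons.prems(3)[rule_format, of c d] ys True by (simp only:)
        then show "filter (\<lambda>e. e = c \<or> e = d) xs = filter (\<lambda>e. e = c \<or> e = d) ys'"
          by (cases "a = c \<or> a = d") auto
      qed
    qed
    then show ?thesis using ys True by simp
  next
    case False
    have "filter (\<lambda>c. c = a \<or> c = b) (a # xs) = filter (\<lambda>c. c = a \<or> c = b) ys"
      using Cons.prems(3) by blast
    moreover have "filter (\<lambda>c. c = a \<or> c = b) (a # xs) = a # filter (\<lambda>c. c = a \<or> c = b) xs" by simp
    moreover have "filter (\<lambda>c. c = a \<or> c = b) ys = b # filter (\<lambda>c. c = a \<or> c = b) ys'" using ys by simp
    ultimately have "a = b" by simp
    then show ?thesis using False by simp
  qed
qed

lemma subst_two:
  assumes "a \<noteq> b"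
  shows "subst (\<lambda>n. if n = a then [0] else if n = b then [1] else []) w
       = map (\<lambda>c. if c = a then 0 else 1) (filter (\<lambda>c. c = a \<or> c = b) w)"
  using assms by (induction w) auto

lemma count_filter: "count_list (filter P w) a = (if P a then count_list w a else 0)"
  by (induction w) auto

lemma filter_two_simple:
  assumes "count_list w a = 1" "count_list w b = 1" "a \<noteq> b"
  shows "filter (\<lambda>c. c = a \<or> c = b) w = [a,b] \<or> filter (\<lambda>c. c = a \<or> c = b) w = [b,a]"
proof -
  let ?f = "filter (\<lambda>c. c = a \<or> c = b) w"
  have ca: "count_list ?f a = 1" "count_list ?f b = 1" using assms
    by (simp_all add: count_filter)
  have len: "length ?f = 2"
  proof -
    have "length ?f = count_list ?f a + count_list ?f b"
    proof -
      have "\<And>xs. set xs \<subseteq> {a,b} \<Longrightarrow> length xs = count_list xs a + count_list xs b"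
      proof -
        fix xs
        show "set xs \<subseteq> {a,b} \<Longrightarrow> length xs = count_list xs a + count_list xs b"
          using assms(3) by (induction xs) auto
      qed
      moreover have "set ?f \<subseteq> {a,b}" by auto
      ultimately show ?thesis by blast
    qed
    then show ?thesis using ca by simp
  qed
  have sub: "set ?f \<subseteq> {a,b}" by auto
  obtain c d where cd: "?f = [c,d]" using len
  proof (cases ?f)
    case Nil then show ?thesis using len by simp
  next
    case (Cons c r)
    then show ?thesis using len that by (cases r) auto
  qed
  then have "c \<in> {a,b}" "d \<in> {a,b}" using sub by auto
  then show ?thesis using cd ca assms(3) by auto
qed

lemma iso_order:
  assumes iso: "isoterm M [0,1]" and h: "holds M u v"
    and a: "count_list u a = 1" and b: "count_list u b = 1" and ab: "a \<noteq> b"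
  shows "filter (\<lambda>c. c = a \<or> c = b) u = filter (\<lambda>c. c = a \<or> c = b) v"
proof -
  have av: "count_list v a = 1" "count_list v b = 1" using iso_count01'[OF iso h] a b by auto
  let ?th = "\<lambda>n. if n = a then [0] else if n = b then [1] else []"
  let ?g = "\<lambda>c. if c = a then 0 else 1::nat"
  have hh: "holds M (map ?g (filter (\<lambda>c. c = a \<or> c = b) u)) (map ?g (filter (\<lambda>c. c = a \<or> c = b) v))"
    using holds_subst[OF h, of ?th] unfolding subst_two[OF ab] .
  have ga: "?g a = 0" "?g b = 1" using ab by auto
  from filter_two_simple[OF a b ab] filter_two_simple[OF av ab]
  show ?thesis
  proof (elim disjE)
    assume 1: "filter (\<lambda>c. c = a \<or> c = b) u = [a, b]" and 2: "filter (\<lambda>c. c = a \<or> c = b) v = [b, a]"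
    have "holds M [0,1] [1,0]" using hh 1 2 ga by simp
    then have "[1,0] = [0::nat,1]" by (rule iso_eq[OF iso])
    then have False by simp
    then show ?thesis ..
  next
    assume 1: "filter (\<lambda>c. c = a \<or> c = b) u = [b, a]" and 2: "filter (\<lambda>c. c = a \<or> c = b) v = [a, b]"
    have "holds M [1,0] [0,1]" using hh 1 2 ga by simp
    then have "holds M [0,1] [1,0]" by (rule holds_sym)
    then have "[1,0] = [0::nat,1]" by (rule iso_eq[OF iso])
    then have False by simp
    then show ?thesis ..
  qed auto
qed

lemma distinct_count_le1: "(\<And>x. count_list xs x \<le> 1) \<Longrightarrow> distinct xs"
proof (induction xs)
  case (Cons a xs)
  have "count_list xs a = 0" using Cons.prems[of a] by simp
  then have "a \<notin> set xs" by (simp add: count_list_0_iff)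
  moreover have "\<And>x. count_list xs x \<le> 1"
  proof -
    fix x show "count_list xs x \<le> 1" using Cons.prems[of x] by (cases "a = x") auto
  qed
  ultimately show ?case using Cons.IH by simp
qed simp

lemma distinct_restr_simp: "distinct (restr w (simp_letters w))"
proof -
  have "\<And>x. count_list (restr w (simp_letters w)) x \<le> 1"
    unfolding restr_def simp_letters_def by (simp add: count_filter)
  then show ?thesis by (rule distinct_count_le1)
qed




lemma sig1:
  assumes "Sigma0 \<subseteq> E"
  shows "derives E (A @ X @ T @ Y @ X @ S @ Y @ B) (A @ X @ T @ X @ Y @ X @ S @ Y @ B)"
proof (rule derives_inst[of "[0,2,1,0,3,1]" "[0,2,0,1,0,3,1]" E _ A
      "\<lambda>n. if n = 0 then X else if n = 1 then Y else if n = 2 then T else S" B])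
  show "([0,2,1,0,3,1], [0,2,0,1,0,3,1]) \<in> E" using assms unfolding Sigma0_def by auto
qed simp_all

lemma sig2:
  assumes "Sigma0 \<subseteq> E"
  shows "derives E (A @ X @ T @ Y @ S @ Y @ X @ B) (A @ X @ T @ Y @ S @ X @ Y @ X @ B)"
proof (rule derives_inst[of "[0,2,1,3,1,0]" "[0,2,1,3,0,1,0]" E _ A
      "\<lambda>n. if n = 0 then X else if n = 1 then Y else if n = 2 then T else S" B])
  show "([0,2,1,3,1,0], [0,2,1,3,0,1,0]) \<in> E" using assms unfolding Sigma0_def by auto
qed simp_all

lemma D1:
  assumes E: "Sigma0 \<subseteq> E" and x: "x \<in> set a"
  shows "derives E (a @ [x] @ c) (a @ [x, x] @ c)"
proof -
  obtain a1 a2 where a: "a = a1 @ x # a2" using split_list[OF x] by blast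
  have "derives E (a1 @ [x] @ a2 @ [] @ [x] @ [] @ [] @ c) (a1 @ [x] @ a2 @ [x] @ [] @ [x] @ [] @ [] @ c)"
    by (rule sig1[OF E])
  then show ?thesis using a by simp
qed

lemma split_two:
  assumes "x \<in> set a" "y \<in> set a" "x \<noteq> y"
  shows "(\<exists>a1 a2 a3. a = a1 @ x # a2 @ y # a3) \<or> (\<exists>a1 a2 a3. a = a1 @ y # a2 @ x # a3)"
proof -
  obtain a1 a2 where a: "a = a1 @ x # a2" using split_list[OF assms(1)] by blast
  have "y \<in> set a1 \<or> y \<in> set a2" using a assms(2,3) by simp
  then show ?thesis
  proof
    assume "y \<in> set a1"
    then obtain b1 b2 where "a1 = b1 @ y # b2" using split_list by metis
    then have "a = b1 @ y # b2 @ x # a2" using a by simp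
    then show ?thesis by blast
  next
    assume "y \<in> set a2"
    then obtain b1 b2 where "a2 = b1 @ y # b2" using split_list by metis
    then have "a = a1 @ x # b1 @ y # b2" using a by simp
    then show ?thesis by blast
  qed
qed

lemma G1:
  assumes E: "Sigma0 \<subseteq> E" and x: "x \<in> set a" and y: "2 \<le> count_list (a @ [y, x] @ c) y"
  shows "derives E (a @ [y, x] @ c) (a @ [x, y, x] @ c)"
proof (cases "y = x")
  case True
  have "derives E ((a @ [x]) @ [x] @ c) ((a @ [x]) @ [x, x] @ c)"
    by (rule D1[OF E]) (use x in simp)
  then show ?thesis using True by simp
next
  case False
  have "y \<in> set a \<or> y \<in> set c"
  proof (rule ccontr)
    assume "\<not> (y \<in> set a \<or> y \<in> set c)"
    then have "count_list a y = 0" "count_list c y = 0" by (simp_all add: count_list_0_iff)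
    then show False using y False by simp
  qed
  then show ?thesis
  proof
    assume "y \<in> set c"
    then obtain c1 c2 where c: "c = c1 @ y # c2" using split_list by metis
    obtain a1 a2 where a: "a = a1 @ x # a2" using split_list[OF x] by blast
    have "derives E (a1 @ [x] @ a2 @ [y] @ [x] @ c1 @ [y] @ c2) (a1 @ [x] @ a2 @ [x] @ [y] @ [x] @ c1 @ [y] @ c2)"
      by (rule sig1[OF E])
    then show ?thesis using a c by simp
  next
    assume ya: "y \<in> set a"
    from split_two[OF x ya not_sym[OF False]] show ?thesis
    proof (elim disjE exE)
      fix a1 a2 a3 assume a: "a = a1 @ x # a2 @ y # a3"
      have "derives E (a1 @ [x] @ a2 @ [y] @ a3 @ [y] @ [x] @ c) (a1 @ [x] @ a2 @ [y] @ a3 @ [x] @ [y] @ [x] @ c)"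
        by (rule sig2[OF E])
      then show ?thesis using a by simp
    next
      fix a1 a2 a3 assume a: "a = a1 @ y # a2 @ x # a3"
      have s1: "derives E ((a1 @ y # a2 @ x # a3) @ [y] @ ([x] @ c)) ((a1 @ y # a2 @ x # a3) @ [y, y] @ ([x] @ c))"
        by (rule D1[OF E]) simp
      have s2: "derives E ((a1 @ y # a2) @ [x] @ a3 @ [y] @ [] @ [y] @ [x] @ c)
                        ((a1 @ y # a2) @ [x] @ a3 @ [y] @ [] @ [x] @ [y] @ [x] @ c)"
        by (rule sig2[OF E])
      have s3: "derives E (a1 @ [y] @ a2 @ [x] @ a3 @ [x] @ [y] @ [x] @ c)
                        (a1 @ [y] @ a2 @ [x] @ a3 @ [y] @ [x] @ [y] @ [x] @ c)"
        using sig2[OF E, of a1 "[y]" a2 "[x]" a3 "[x] @ c"] by simp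
      have s1': "derives E (a @ [y, x] @ c) (a1 @ [y] @ a2 @ [x] @ a3 @ [y] @ [] @ [y] @ [x] @ c)"
        using s1 a by simp
      have s2': "derives E (a1 @ [y] @ a2 @ [x] @ a3 @ [y] @ [] @ [y] @ [x] @ c) (a1 @ [y] @ a2 @ [x] @ a3 @ [y] @ [x] @ [y] @ [x] @ c)"
        using s2 by simp
      have "derives E (a @ [y, x] @ c) (a1 @ [y] @ a2 @ [x] @ a3 @ [y] @ [x] @ [y] @ [x] @ c)"
        using derives.trans[OF s1' s2'] .
      then show ?thesis using derives.sym[OF s3] a by (simp add: derives.trans)
    qed
  qed
qed

lemma Gp:
  assumes E: "Sigma0 \<subseteq> E"
  shows "x \<in> set a \<Longrightarrow> (\<forall>y\<in>set w. 2 \<le> count_list (a @ w @ [x] @ c) y) \<Longrightarrow>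
    derives E (a @ w @ [x] @ c) (a @ [x] @ w @ [x] @ c)"
proof (induction w arbitrary: a)
  case Nil
  then show ?case using D1[OF E Nil(1)] by simp
next
  case (Cons y w)
  have c1: "\<forall>z\<in>set w. 2 \<le> count_list ((a @ [y]) @ w @ [x] @ c) z" using Cons.prems(2) by simp
  have s1: "derives E ((a @ [y]) @ w @ [x] @ c) ((a @ [y]) @ [x] @ w @ [x] @ c)"
    by (rule Cons.IH) (use Cons.prems(1) c1 in auto)
  have cy: "2 \<le> count_list (a @ (y # w) @ [x] @ c) y" using Cons.prems(2) by simp
  have "count_list (a @ (y # w) @ [x] @ c) y \<le> count_list (a @ [y, x] @ (w @ [x] @ c)) y" by simp
  then have cy2: "2 \<le> count_list (a @ [y, x] @ (w @ [x] @ c)) y" using cy by linarith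
  have s2: "derives E (a @ [y, x] @ (w @ [x] @ c)) (a @ [x, y, x] @ (w @ [x] @ c))"
    by (rule G1[OF E Cons.prems(1) cy2])
  have c3: "\<forall>z\<in>set w. 2 \<le> count_list ((a @ [x, y]) @ w @ [x] @ c) z"
  proof
    fix z assume "z \<in> set w"
    then have "2 \<le> count_list (a @ (y # w) @ [x] @ c) z" using Cons.prems(2) by simp
    then show "2 \<le> count_list ((a @ [x, y]) @ w @ [x] @ c) z" by simp
  qed
  have s3: "derives E ((a @ [x, y]) @ w @ [x] @ c) ((a @ [x, y]) @ [x] @ w @ [x] @ c)"
    by (rule Cons.IH) (use Cons.prems(1) c3 in auto)
  have s1': "derives E (a @ (y # w) @ [x] @ c) (a @ [y, x] @ (w @ [x] @ c))" using s1 by simp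
  have "derives E (a @ (y # w) @ [x] @ c) (a @ [x, y, x] @ (w @ [x] @ c))"
    using derives.trans[OF s1' s2] .
  moreover have "derives E (a @ [x, y, x] @ (w @ [x] @ c)) (a @ [x] @ (y # w) @ [x] @ c)"
    using derives.sym[OF s3] by simp
  ultimately show ?case by (rule derives.trans)
qed

lemma Gp_rem:
  assumes E: "Sigma0 \<subseteq> E" and "x \<in> set a" "\<forall>y\<in>set w. 2 \<le> count_list (a @ w @ [x] @ c) y"
  shows "derives E (a @ [x] @ w @ [x] @ c) (a @ w @ [x] @ c)"
  using derives.sym[OF Gp[OF assms]] .

lemma D1_rem:
  assumes E: "Sigma0 \<subseteq> E" and x: "x \<in> set a"
  shows "derives E (a @ [x, x] @ c) (a @ [x] @ c)"
  using derives.sym[OF D1[OF assms]] .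




fun ilvw :: "word list \<Rightarrow> word list \<Rightarrow> word" where
  "ilvw (b # bs) (c # cs) = b @ c @ ilvw bs cs"
| "ilvw (b # bs) [] = b"
| "ilvw [] cs = []"

definition ilv :: "word list \<Rightarrow> nat list \<Rightarrow> word" where
  "ilv bs ts = ilvw bs (map (\<lambda>t. [t]) ts)"

lemma ilvw_cons_first: "ilvw (b # bs) cs = b @ ilvw ([] # bs) cs"
  by (cases cs) auto

lemma ilvw_append:
  "length bs1 = Suc (length cs1) \<Longrightarrow>
   ilvw (bs1 @ bs2) (cs1 @ c # cs2) = ilvw bs1 cs1 @ c @ ilvw bs2 cs2"
proof (induction cs1 arbitrary: bs1)
  case Nil
  then obtain b where "bs1 = [b]" by (cases bs1) auto
  then show ?case by simp
next
  case (Cons c1 cs1)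
  then obtain b bs1' where "bs1 = b # bs1'" by (cases bs1) auto
  then show ?case using Cons by simp
qed

definition pre :: "nat \<Rightarrow> word list \<Rightarrow> word list \<Rightarrow> word" where
  "pre j bs cs = ilvw (take j bs @ [[]]) (take j cs)"
definition suf :: "nat \<Rightarrow> word list \<Rightarrow> word list \<Rightarrow> word" where
  "suf j bs cs = ilvw ([] # drop (Suc j) bs) (drop j cs)"

lemma ilvw_decomp:
  "j < length bs \<Longrightarrow> length bs = Suc (length cs) \<Longrightarrow>
   ilvw bs cs = pre j bs cs @ bs ! j @ suf j bs cs"
proof (induction j arbitrary: bs cs)
  case 0
  then obtain b bs' where "bs = b # bs'" by (cases bs) auto
  then show ?case unfolding pre_def suf_def using ilvw_cons_first[of b bs' cs] by simp
next
  case (Suc j)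
  then obtain b bs' where bs: "bs = b # bs'" by (cases bs) auto
  have "cs \<noteq> []" using Suc.prems bs by auto
  then obtain c cs' where cs: "cs = c # cs'" by (cases cs) auto
  have l: "j < length bs'" "length bs' = Suc (length cs')" using Suc.prems bs cs by auto
  have ih: "ilvw bs' cs' = pre j bs' cs' @ bs' ! j @ suf j bs' cs'"
    by (rule Suc.IH[OF l])
  have p: "pre (Suc j) bs cs = b @ c @ pre j bs' cs'" unfolding pre_def bs cs by simp
  have s: "suf (Suc j) bs cs = suf j bs' cs'" unfolding suf_def bs cs by simp
  have "ilvw bs cs = b @ c @ ilvw bs' cs'" unfolding bs cs by simp
  then show ?case using ih p s bs by simp
qed

lemma pre_upd: "pre j (bs[j := B]) cs = pre j bs cs"
  unfolding pre_def by simp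
lemma suf_upd: "suf j (bs[j := B]) cs = suf j bs cs"
  unfolding suf_def by simp

lemma ilvw_upd:
  "j < length bs \<Longrightarrow> length bs = Suc (length cs) \<Longrightarrow>
   ilvw (bs[j := B]) cs = pre j bs cs @ B @ suf j bs cs"
  using ilvw_decomp[of j "bs[j := B]" cs] by (simp add: pre_upd suf_upd)

lemma ilvw_split2:
  assumes "i < length bs" "length bs = Suc (length cs)"
  shows "ilvw (take i bs @ [B1, B2] @ drop (Suc i) bs) (take i cs @ [Q] @ drop i cs)
       = pre i bs cs @ B1 @ Q @ B2 @ suf i bs cs"
proof -
  let ?bs = "take i bs @ [B1, B2] @ drop (Suc i) bs"
  let ?cs = "take i cs @ [Q] @ drop i cs"
  have li: "i \<le> length cs" using assms by simp
  have l1: "i < length ?bs" "length ?bs = Suc (length ?cs)" using assms by auto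
  have n: "?bs ! i = B1" using assms by (simp add: nth_append)
  have p: "pre i ?bs ?cs = pre i bs cs" unfolding pre_def using assms li by simp
  have "drop (Suc i) ?bs = B2 # drop (Suc i) bs" using assms by simp
  moreover have "drop i ?cs = Q # drop i cs" using li by simp
  ultimately have s: "suf i ?bs ?cs = Q @ B2 @ suf i bs cs"
    unfolding suf_def using ilvw_cons_first[of B2 "drop (Suc i) bs" "drop i cs"] by simp
  show ?thesis using ilvw_decomp[OF l1] n p s by simp
qed

lemma set_pre:
  assumes "k < j" "j < length bs" "length bs = Suc (length cs)"
  shows "set (bs ! k) \<subseteq> set (pre j bs cs)"
proof -
  let ?bs = "take j bs @ [[]]" and ?cs = "take j cs"
  have l: "k < length ?bs" "length ?bs = Suc (length ?cs)" using assms by auto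
  have "ilvw ?bs ?cs = pre k ?bs ?cs @ ?bs ! k @ suf k ?bs ?cs" by (rule ilvw_decomp[OF l])
  moreover have "?bs ! k = bs ! k" using assms by (simp add: nth_append)
  ultimately show ?thesis unfolding pre_def[of j] by auto
qed

lemma count_ilvw:
  "length bs = Suc (length cs) \<Longrightarrow>
   count_list (ilvw bs cs) y = sum_list (map (\<lambda>b. count_list b y) bs) + sum_list (map (\<lambda>c. count_list c y) cs)"
proof (induction cs arbitrary: bs)
  case Nil
  then obtain b where "bs = [b]" by (cases bs) auto
  then show ?case by simp
next
  case (Cons c cs)
  then obtain b bs' where "bs = b # bs'" by (cases bs) auto
  then show ?case using Cons by simp
qed

lemma set_ilvw:
  "length bs = Suc (length cs) \<Longrightarrow> set (ilvw bs cs) = \<Union>(set ` set bs) \<union> \<Union>(set ` set cs)"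
proof (induction cs arbitrary: bs)
  case Nil
  then obtain b where "bs = [b]" by (cases bs) auto
  then show ?case by simp
next
  case (Cons c cs)
  then obtain b bs' where "bs = b # bs'" by (cases bs) auto
  then show ?case using Cons by auto
qed

lemma restr_append[simp]: "restr (a @ b) X = restr a X @ restr b X"
  by (simp add: restr_def)
lemma restr_Cons: "restr (a # w) X = (if a \<in> X then a # restr w X else restr w X)"
  by (simp add: restr_def)
lemma restr_Nil[simp]: "restr [] X = []"
  by (simp add: restr_def)

lemma restr_ilvw: "restr (ilvw bs cs) X = ilvw (map (\<lambda>b. restr b X) bs) (map (\<lambda>c. restr c X) cs)"
  by (induction bs cs rule: ilvw.induct) auto

lemma subst_ilvw: "subst \<theta> (ilvw bs cs) = ilvw (map (subst \<theta>) bs) (map (subst \<theta>) cs)"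
  by (induction bs cs rule: ilvw.induct) auto

lemma restr_subst: "restr w X = subst (\<lambda>a. if a \<in> X then [a] else []) w"
  by (induction w) (auto simp: restr_Cons)

lemma holds_restr: "holds M u v \<Longrightarrow> holds M (restr u X) (restr v X)"
  unfolding restr_subst by (rule holds_subst)

lemma split_nonempty: "split_at_letters S w \<noteq> []"
  by (induction w) (auto split: list.splits)

lemma split_block:
  "set B \<inter> S = {} \<Longrightarrow>
   split_at_letters S (B @ w) = (B @ hd (split_at_letters S w)) # tl (split_at_letters S w)"
proof (induction B)
  case Nil
  then show ?case using split_nonempty[of S w] by (cases "split_at_letters S w") auto
next
  case (Cons a B)
  then show ?case by simp
qed

lemma split_ilv:
  "length bs = Suc (length ts) \<Longrightarrow> set ts \<subseteq> S \<Longrightarrow> (\<forall>B\<in>set bs. set B \<inter> S = {}) \<Longrightarrow>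
   split_at_letters S (ilv bs ts) = bs"
proof (induction ts arbitrary: bs)
  case Nil
  then obtain B where bs: "bs = [B]" by (cases bs) auto
  then have "split_at_letters S (B @ []) = [B]" using split_block[of B S "[]"] Nil by simp
  then show ?case using bs by (simp add: ilv_def)
next
  case (Cons t ts)
  then obtain B bs' where bs: "bs = B # bs'" by (cases bs) auto
  have ih: "split_at_letters S (ilv bs' ts) = bs'" using Cons bs by auto
  have "ilv bs (t # ts) = B @ (t # ilv bs' ts)" using bs by (simp add: ilv_def)
  moreover have "split_at_letters S (t # ilv bs' ts) = [] # bs'" using ih Cons.prems(2) by simp
  ultimately show ?case using split_block[of B S "t # ilv bs' ts"] Cons.prems(3) bs by simp
qed

lemma rep_split:
  "ilv (split_at_letters S w) (filter (\<lambda>a. a \<in> S) w) = w \<and>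
   length (split_at_letters S w) = Suc (length (filter (\<lambda>a. a \<in> S) w)) \<and>
   (\<forall>B\<in>set (split_at_letters S w). set B \<inter> S = {})"
proof (induction w)
  case Nil
  then show ?case by (simp add: ilv_def)
next
  case (Cons a w)
  show ?case
  proof (cases "a \<in> S")
    case True
    then show ?thesis using Cons by (simp add: ilv_def)
  next
    case False
    obtain b bs where sp: "split_at_letters S w = b # bs" using split_nonempty[of S w] by (cases "split_at_letters S w") auto
    have "ilvw ((a # b) # bs) (map (\<lambda>t. [t]) (filter (\<lambda>a. a \<in> S) w)) = a # ilvw (b # bs) (map (\<lambda>t. [t]) (filter (\<lambda>a. a \<in> S) w))"
      by (cases "filter (\<lambda>a. a \<in> S) w") auto
    then show ?thesis using Cons False sp by (auto simp: ilv_def)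
  qed
qed

lemma distinct_count1: "distinct xs \<Longrightarrow> x \<in> set xs \<Longrightarrow> count_list xs x = 1"
  by (induction xs) (auto simp: count_list_0_iff)

lemma count_pos_iff: "0 < count_list w x \<longleftrightarrow> x \<in> set w"
  using count_list_0_iff[of w x] by linarith

definition good :: "word list \<Rightarrow> nat list \<Rightarrow> bool" where
  "good bs ts \<longleftrightarrow> length bs = Suc (length ts) \<and> distinct ts \<and> (\<forall>B\<in>set bs. set B \<inter> set ts = {}) \<and>
     (\<forall>y. sum_list (map (\<lambda>B. count_list B y) bs) \<noteq> 1)"

lemma count_ilv:
  "length bs = Suc (length ts) \<Longrightarrow>
   count_list (ilv bs ts) y = sum_list (map (\<lambda>b. count_list b y) bs) + count_list ts y"
proof -
  assume l: "length bs = Suc (length ts)"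
  have "sum_list (map (\<lambda>c. count_list c y) (map (\<lambda>t. [t]) ts)) = count_list ts y"
    by (induction ts) auto
  then show ?thesis using count_ilvw[of bs "map (\<lambda>t. [t]) ts" y] l by (simp add: ilv_def)
qed

lemma sum_count_zero: "(\<forall>B\<in>set bs. y \<notin> set B) \<Longrightarrow> sum_list (map (\<lambda>b. count_list b y) bs) = 0"
  by (induction bs) auto

lemma good_simp:
  assumes g: "good bs ts" shows "simp_letters (ilv bs ts) = set ts"
proof -
  have l: "length bs = Suc (length ts)" using g by (simp add: good_def)
  have "\<And>y. count_list (ilv bs ts) y = 1 \<longleftrightarrow> y \<in> set ts"
  proof -
    fix y
    show "count_list (ilv bs ts) y = 1 \<longleftrightarrow> y \<in> set ts"
    proof (cases "y \<in> set ts")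
      case True
      then have "\<forall>B\<in>set bs. y \<notin> set B" using g by (auto simp: good_def)
      then have z: "sum_list (map (\<lambda>b. count_list b y) bs) = 0" by (rule sum_count_zero)
      have c1: "count_list ts y = 1" using True g by (simp add: good_def distinct_count1)
      have "count_list (ilv bs ts) y = 1" using count_ilv[OF l, of y] z c1 by linarith
      then show ?thesis using True by simp
    next
      case False
      then have "count_list ts y = 0" by (simp add: count_list_0_iff)
      then show ?thesis using count_ilv[OF l, of y] g False by (simp add: good_def)
    qed
  qed
  then show ?thesis unfolding simp_letters_def by auto
qed

lemma good_blocks: "good bs ts \<Longrightarrow> blocks (ilv bs ts) = bs"
  unfolding blocks_def by (subst good_simp) (auto simp: good_def intro!: split_ilv)

lemma restr_singles: "set ts \<subseteq> S \<Longrightarrow> restr ts S = ts"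
  by (induction ts) (auto simp: restr_Cons)

lemma good_restr_simp: "good bs ts \<Longrightarrow> restr (ilv bs ts) (simp_letters (ilv bs ts)) = ts"
proof -
  assume g: "good bs ts"
  have r1: "restr (ilv bs ts) (set ts) = ilvw (map (\<lambda>b. restr b (set ts)) bs) (map (\<lambda>c. restr c (set ts)) (map (\<lambda>t. [t]) ts))"
    unfolding ilv_def by (rule restr_ilvw)
  have l: "length bs = Suc (length ts)" using g by (simp add: good_def)
  have "\<forall>b\<in>set bs. restr b (set ts) = []" using g by (auto simp: good_def restr_def filter_empty_conv)
  then have "map (\<lambda>b. restr b (set ts)) bs = map (\<lambda>b. []) bs" by simp
  then have e2: "map (\<lambda>b. restr b (set ts)) bs = replicate (Suc (length ts)) []"
    using l by (simp add: map_replicate_const)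
  have e3: "map (\<lambda>c. restr c (set ts)) (map (\<lambda>t. [t]) ts) = map (\<lambda>t. [t]) ts"
    by (induction ts) (auto simp: restr_def)
  have e4: "ilvw (replicate (Suc (length ts)) []) (map (\<lambda>t. [t]) ts) = ts"
    by (induction ts) auto
  have "restr (ilv bs ts) (set ts) = ts" by (simp only: r1 e2 e3 e4)
  then show ?thesis using good_simp[OF g] by simp
qed

lemma good_mul:
  "good bs ts \<Longrightarrow> mul_letters (ilv bs ts) = {y. 2 \<le> sum_list (map (\<lambda>B. count_list B y) bs)}"
proof -
  assume g: "good bs ts"
  have l: "length bs = Suc (length ts)" using g by (simp add: good_def)
  have "\<And>y. 2 \<le> count_list (ilv bs ts) y \<longleftrightarrow> 2 \<le> sum_list (map (\<lambda>B. count_list B y) bs)"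
  proof -
    fix y
    show "2 \<le> count_list (ilv bs ts) y \<longleftrightarrow> 2 \<le> sum_list (map (\<lambda>B. count_list B y) bs)"
    proof (cases "y \<in> set ts")
      case True
      then have "\<forall>B\<in>set bs. y \<notin> set B" using g by (auto simp: good_def)
      then have z: "sum_list (map (\<lambda>b. count_list b y) bs) = 0" by (rule sum_count_zero)
      have c1: "count_list ts y = 1" using True g by (simp add: good_def distinct_count1)
      have c2: "count_list (ilv bs ts) y = 1" using count_ilv[OF l, of y] z c1 by linarith
      have "\<not> 2 \<le> count_list (ilv bs ts) y" "\<not> 2 \<le> sum_list (map (\<lambda>B. count_list B y) bs)"
        using c2 z by linarith+
      then show ?thesis by blast
    next
      case False
      then have "count_list ts y = 0" by (simp add: count_list_0_iff)
      then show ?thesis using count_ilv[OF l, of y] by simp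
    qed
  qed
  then show ?thesis unfolding mul_letters_def by auto
qed

lemma word_good:
  "good (blocks w) (restr w (simp_letters w)) \<and> ilv (blocks w) (restr w (simp_letters w)) = w"
proof -
  let ?S = "simp_letters w"
  have r: "ilv (blocks w) (restr w ?S) = w" "length (blocks w) = Suc (length (restr w ?S))"
    "\<forall>B\<in>set (blocks w). set B \<inter> ?S = {}"
    using rep_split[of ?S w] unfolding blocks_def restr_def by auto
  have d: "distinct (restr w ?S)" by (rule distinct_restr_simp)
  have st: "set (restr w ?S) = ?S" unfolding restr_def simp_letters_def
    using count_pos_iff[of w] by force
  have cnt: "\<forall>y. sum_list (map (\<lambda>B. count_list B y) (blocks w)) \<noteq> 1"
  proof
    fix y
    have c: "count_list w y = sum_list (map (\<lambda>B. count_list B y) (blocks w)) + count_list (restr w ?S) y"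
      using count_ilv[OF r(2), of y] r(1) by simp
    show "sum_list (map (\<lambda>B. count_list B y) (blocks w)) \<noteq> 1"
    proof (cases "y \<in> ?S")
      case True
      then have "\<forall>B\<in>set (blocks w). y \<notin> set B" using r(3) by auto
      then have "sum_list (map (\<lambda>b. count_list b y) (blocks w)) = 0" by (rule sum_count_zero)
      then show ?thesis by linarith
    next
      case False
      then have "count_list (restr w ?S) y = 0" using st by (simp add: count_list_0_iff)
      then show ?thesis using c False unfolding simp_letters_def by simp
    qed
  qed
  show ?thesis using r d st cnt unfolding good_def by auto
qed

definition cnt :: "word list \<Rightarrow> nat \<Rightarrow> nat list" where
  "cnt bs x = map (\<lambda>B. count_list B x) bs"

definition xc :: "nat list \<Rightarrow> bool" where
  "xc cs \<longleftrightarrow> (let i = (LEAST i. i < length cs \<and> 0 < cs ! i)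
     in \<forall>j < length cs. cs ! j \<le> (if j = i then 2 else 1))"

lemma x_compact_cnt: "x_compact w x = xc (cnt (blocks w) x)"
proof -
  have "\<And>i. (i < length (blocks w) \<and> x \<in> set (blocks w ! i)) = (i < length (cnt (blocks w) x) \<and> 0 < cnt (blocks w) x ! i)"
    by (auto simp: cnt_def count_pos_iff)
  then show ?thesis unfolding x_compact_def xc_def Let_def by (simp add: cnt_def)
qed




definition pat :: "nat \<Rightarrow> nat list \<Rightarrow> nat list \<Rightarrow> word" where
  "pat x ks ts = ilvw (map (\<lambda>k. replicate k x) ks) (map (\<lambda>t. [t]) ts)"

definition blk :: "nat \<Rightarrow> (word \<times> word) list \<Rightarrow> nat list \<Rightarrow> word list" where
  "blk x LRs ks = map (\<lambda>((L, R), k). L @ replicate k x @ R) (zip LRs ks)"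

lemma subst_rep: "\<theta> x = [x] \<Longrightarrow> subst \<theta> (replicate k x) = replicate k x"
  by (induction k) auto

lemma lift_sub:
  assumes tx: "\<theta> x = [x]"
  shows "length LRs = Suc (length ts) \<Longrightarrow> length ks = Suc (length ts) \<Longrightarrow> length Cs = length ts \<Longrightarrow>
    (\<forall>i<length ts. \<theta> (ts ! i) = snd (LRs ! i) @ Cs ! i @ fst (LRs ! Suc i)) \<Longrightarrow>
    fst (hd LRs) @ subst \<theta> (pat x ks ts) @ snd (last LRs) = ilvw (blk x LRs ks) Cs"
proof (induction ts arbitrary: LRs ks Cs)
  case Nil
  then obtain L R k where "LRs = [(L, R)]" "ks = [k]" "Cs = []"
    by (cases LRs; cases ks; cases Cs) auto
  then show ?case using subst_rep[of \<theta> x, OF tx] by (simp add: pat_def blk_def)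
next
  case (Cons t ts)
  obtain L0 R0 LRs' where LRs: "LRs = (L0, R0) # LRs'" using Cons.prems(1) by (cases LRs) auto
  obtain k0 ks' where ks: "ks = k0 # ks'" using Cons.prems(2) by (cases ks) auto
  obtain C0 Cs' where Cs: "Cs = C0 # Cs'" using Cons.prems(3) by (cases Cs) auto
  have l: "length LRs' = Suc (length ts)" "length ks' = Suc (length ts)" "length Cs' = length ts"
    using Cons.prems LRs ks Cs by auto
  have h: "\<forall>i<length ts. \<theta> (ts ! i) = snd (LRs' ! i) @ Cs' ! i @ fst (LRs' ! Suc i)"
  proof (intro allI impI)
    fix i assume "i < length ts"
    then show "\<theta> (ts ! i) = snd (LRs' ! i) @ Cs' ! i @ fst (LRs' ! Suc i)"
      using Cons.prems(4)[rule_format, of "Suc i"] LRs Cs by simp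
  qed
  have ih: "fst (hd LRs') @ subst \<theta> (pat x ks' ts) @ snd (last LRs') = ilvw (blk x LRs' ks') Cs'"
    by (rule Cons.IH[OF l h])
  have th: "\<theta> t = R0 @ C0 @ fst (hd LRs')"
    using Cons.prems(4)[rule_format, of 0] LRs Cs l(1) by (cases LRs') auto
  have ne: "LRs' \<noteq> []" using l by auto
  have p: "pat x ks (t # ts) = replicate k0 x @ [t] @ pat x ks' ts" unfolding pat_def ks by simp
  have b: "blk x LRs ks = (L0 @ replicate k0 x @ R0) # blk x LRs' ks'" unfolding blk_def LRs ks by simp
  show ?case using ih th ne p b LRs Cs subst_rep[of \<theta> x, OF tx] by simp
qed

lemma count_pat:
  assumes "length ks = Suc (length ts)" "y \<noteq> x"
  shows "count_list (pat x ks ts) y = count_list ts y"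
proof -
  have l: "length (map (\<lambda>k. replicate k x) ks) = Suc (length (map (\<lambda>t. [t]) ts))" using assms by simp
  have "sum_list (map (\<lambda>b. count_list b y) (map (\<lambda>k. replicate k x) ks)) = 0"
    by (rule sum_count_zero) (use assms(2) in auto)
  moreover have "sum_list (map (\<lambda>c. count_list c y) (map (\<lambda>t. [t]) ts)) = count_list ts y"
    by (induction ts) auto
  ultimately show ?thesis using count_ilvw[OF l, of y] unfolding pat_def by simp
qed

lemma pat_almost_linear:
  assumes "length ks = Suc (length ts)" "distinct ts"
  shows "almost_linear (pat x ks ts)"
proof -
  have "mul_letters (pat x ks ts) \<subseteq> {x}"
  proof
    fix y assume y: "y \<in> mul_letters (pat x ks ts)"
    show "y \<in> {x}"
    proof (rule ccontr)
      assume "y \<notin> {x}"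
      then have "count_list (pat x ks ts) y = count_list ts y" using count_pat[OF assms(1)] by simp
      moreover have "count_list ts y \<le> 1"
        using assms(2) distinct_count1[of ts y] count_list_0_iff[of ts y] by (cases "y \<in> set ts") auto
      ultimately show False using y unfolding mul_letters_def by simp
    qed
  qed
  then have "card (mul_letters (pat x ks ts)) \<le> card {x}" by (intro card_mono) auto
  then show ?thesis unfolding almost_linear_def by simp
qed

lemma lift:
  assumes tx: "x \<notin> set ts" and d: "distinct ts"
    and l: "length LRs = Suc (length ts)" "length ks = Suc (length ts)" "length ks' = Suc (length ts)"
      "length Cs = length ts"
    and h: "holds M (pat x ks ts) (pat x ks' ts)"
  shows "derives (Gamma M) (ilvw (blk x LRs ks) Cs) (ilvw (blk x LRs ks') Cs)"
proof -
  define imgs where "imgs = map (\<lambda>i. snd (LRs ! i) @ Cs ! i @ fst (LRs ! Suc i)) [0..<length ts]"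
  define \<theta> where "\<theta> = (\<lambda>a. if a = x then [x] else case map_of (zip ts imgs) a of Some w \<Rightarrow> w | None \<Rightarrow> [])"
  have t1: "\<theta> x = [x]" unfolding \<theta>_def by simp
  have t2: "\<forall>i<length ts. \<theta> (ts ! i) = snd (LRs ! i) @ Cs ! i @ fst (LRs ! Suc i)"
  proof (intro allI impI)
    fix i assume i: "i < length ts"
    have "ts ! i \<noteq> x" using tx i by auto
    moreover have "map_of (zip ts imgs) (ts ! i) = Some (imgs ! i)"
      by (rule map_of_zip_nth) (use d i in \<open>auto simp: imgs_def\<close>)
    ultimately show "\<theta> (ts ! i) = snd (LRs ! i) @ Cs ! i @ fst (LRs ! Suc i)"
      unfolding \<theta>_def using i by (simp add: imgs_def)
  qed
  have e1: "fst (hd LRs) @ subst \<theta> (pat x ks ts) @ snd (last LRs) = ilvw (blk x LRs ks) Cs"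
    by (rule lift_sub[OF t1 l(1,2,4) t2])
  have e2: "fst (hd LRs) @ subst \<theta> (pat x ks' ts) @ snd (last LRs) = ilvw (blk x LRs ks') Cs"
    by (rule lift_sub[OF t1 l(1,3,4) t2])
  have mem: "(pat x ks ts, pat x ks' ts) \<in> Gamma M"
    unfolding Gamma_def using h pat_almost_linear[OF l(2) d] pat_almost_linear[OF l(3) d] by simp
  show ?thesis using derives_inst[OF mem e1[symmetric] e2[symmetric]] .
qed

lemma subst_id_on: "(\<forall>a\<in>set w. \<rho> a = [a]) \<Longrightarrow> subst \<rho> w = w"
  by (induction w) auto

lemma ilvw_move:
  "j < length cs \<Longrightarrow> length bs = Suc (length cs) \<Longrightarrow>
   ilvw bs (cs[j := cs ! j @ W]) = ilvw (bs[Suc j := W @ bs ! Suc j]) cs"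
proof (induction j arbitrary: bs cs)
  case 0
  then obtain b0 b1 bs' c0 cs' where "bs = b0 # b1 # bs'" "cs = c0 # cs'"
    by (cases bs; cases cs) (auto simp: length_Suc_conv)
  then show ?case using ilvw_cons_first[of "W @ b1" bs' cs'] ilvw_cons_first[of b1 bs' cs'] by simp
next
  case (Suc j)
  then obtain b0 bs' c0 cs' where bc: "bs = b0 # bs'" "cs = c0 # cs'"
    by (cases bs; cases cs) auto
  have "ilvw bs' (cs'[j := cs' ! j @ W]) = ilvw (bs'[Suc j := W @ bs' ! Suc j]) cs'"
    using Suc bc by simp
  then show ?case using bc by simp
qed

lemma ilvw_upd0:
  "0 < length bs \<Longrightarrow> length bs = Suc (length cs) \<Longrightarrow> ilvw (bs[0 := W @ bs ! 0]) cs = W @ ilvw bs cs"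
  using ilvw_upd[of 0 bs cs "W @ bs ! 0"] ilvw_decomp[of 0 bs cs] by (simp add: pre_def)

lemma holds_ins:
  assumes h: "holds M (ilvw bs (map (\<lambda>t. [t]) ts)) (ilvw bs' (map (\<lambda>t. [t]) ts))"
    and d: "distinct ts" and i: "i < length bs" and l: "length bs = Suc (length ts)" "length bs' = Suc (length ts)"
    and nb: "\<forall>b\<in>set bs \<union> set bs'. set b \<inter> set ts = {}"
  shows "holds M (ilvw (bs[i := W @ bs ! i]) (map (\<lambda>t. [t]) ts)) (ilvw (bs'[i := W @ bs' ! i]) (map (\<lambda>t. [t]) ts))"
proof (cases i)
  case 0
  have "holds M (W @ ilvw bs (map (\<lambda>t. [t]) ts) @ []) (W @ ilvw bs' (map (\<lambda>t. [t]) ts) @ [])"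
    by (rule holds_ctx[OF h])
  then show ?thesis using 0 ilvw_upd0[of bs "map (\<lambda>t. [t]) ts" W] ilvw_upd0[of bs' "map (\<lambda>t. [t]) ts" W] l by simp
next
  case (Suc j)
  let ?t = "ts ! j"
  define \<rho> where "\<rho> = (\<lambda>a. if a = ?t then [a] @ W else [a])"
  have j: "j < length ts" using i l Suc by simp
  have mb: "\<And>b. b \<in> set bs \<union> set bs' \<Longrightarrow> subst \<rho> b = b"
  proof -
    fix b assume "b \<in> set bs \<union> set bs'"
    then have "?t \<notin> set b" using nb j by (meson disjoint_iff nth_mem)
    then show "subst \<rho> b = b" by (intro subst_id_on) (auto simp: \<rho>_def)
  qed
  have mbs: "map (subst \<rho>) bs = bs" "map (subst \<rho>) bs' = bs'"
    using mb by (simp_all add: map_idI)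
  have mts: "map (subst \<rho>) (map (\<lambda>t. [t]) ts) = (map (\<lambda>t. [t]) ts)[j := [?t] @ W]"
  proof (rule nth_equalityI)
    show "length (map (subst \<rho>) (map (\<lambda>t. [t]) ts)) = length ((map (\<lambda>t. [t]) ts)[j := [?t] @ W])" by simp
  next
    fix k assume k: "k < length (map (subst \<rho>) (map (\<lambda>t. [t]) ts))"
    show "map (subst \<rho>) (map (\<lambda>t. [t]) ts) ! k = ((map (\<lambda>t. [t]) ts)[j := [?t] @ W]) ! k"
    proof (cases "k = j")
      case True then show ?thesis using k by (simp add: \<rho>_def)
    next
      case False
      then have "ts ! k \<noteq> ts ! j" using d k j by (simp add: nth_eq_iff_index_eq)
      then show ?thesis using False k by (simp add: \<rho>_def)
    qed
  qed
  have lc: "j < length (map (\<lambda>t. [t]) ts)" using j by simp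
  have e: "\<And>B. length B = Suc (length ts) \<Longrightarrow> (\<forall>b\<in>set B. subst \<rho> b = b) \<Longrightarrow>
      subst \<rho> (ilvw B (map (\<lambda>t. [t]) ts)) = ilvw (B[i := W @ B ! i]) (map (\<lambda>t. [t]) ts)"
  proof -
    fix B :: "word list" assume lB: "length B = Suc (length ts)" and fB: "\<forall>b\<in>set B. subst \<rho> b = b"
    have mB: "map (subst \<rho>) B = B" using fB by (simp add: map_idI)
    have "subst \<rho> (ilvw B (map (\<lambda>t. [t]) ts)) = ilvw B ((map (\<lambda>t. [t]) ts)[j := [?t] @ W])"
      by (simp only: subst_ilvw[of \<rho> B "map (\<lambda>t. [t]) ts"] mts mB)
    also have "\<dots> = ilvw B ((map (\<lambda>t. [t]) ts)[j := (map (\<lambda>t. [t]) ts) ! j @ W])" using j by simp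
    also have "\<dots> = ilvw (B[Suc j := W @ B ! Suc j]) (map (\<lambda>t. [t]) ts)"
      by (rule ilvw_move) (use lc lB in auto)
    finally show "subst \<rho> (ilvw B (map (\<lambda>t. [t]) ts)) = ilvw (B[i := W @ B ! i]) (map (\<lambda>t. [t]) ts)"
      using Suc by simp
  qed
  have "holds M (subst \<rho> (ilvw bs (map (\<lambda>t. [t]) ts))) (subst \<rho> (ilvw bs' (map (\<lambda>t. [t]) ts)))"
    by (rule holds_subst[OF h])
  then show ?thesis using e[OF l(1)] e[OF l(2)] mb by auto
qed

lemma pat_split:
  assumes "i < length e" "length e = Suc (length ts)"
  shows "pat x (take i e @ [a, b] @ drop (Suc i) e) (take i ts @ [z] @ drop i ts)
       = ilvw ((map (\<lambda>k. replicate k x) e)[i := replicate a x @ [z] @ replicate b x]) (map (\<lambda>t. [t]) ts)"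
proof -
  let ?E = "map (\<lambda>k. replicate k x) e" and ?C = "map (\<lambda>t. [t]) ts"
  have l: "i < length ?E" "length ?E = Suc (length ?C)" using assms by auto
  have "pat x (take i e @ [a, b] @ drop (Suc i) e) (take i ts @ [z] @ drop i ts)
      = ilvw (take i ?E @ [replicate a x, replicate b x] @ drop (Suc i) ?E) (take i ?C @ [[z]] @ drop i ?C)"
    unfolding pat_def by (simp add: take_map drop_map)
  also have "\<dots> = pre i ?E ?C @ replicate a x @ [z] @ replicate b x @ suf i ?E ?C"
    by (rule ilvw_split2[OF l])
  also have "\<dots> = ilvw (?E[i := replicate a x @ [z] @ replicate b x]) ?C"
    using ilvw_upd[OF l] by simp
  finally show ?thesis .
qed

lemma blk_split:
  assumes "i < length LRs" "length LRs = length ks"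
  shows "blk x (take i LRs @ [p1, p2] @ drop (Suc i) LRs) (take i ks @ [a, b] @ drop (Suc i) ks)
       = take i (blk x LRs ks) @ [fst p1 @ replicate a x @ snd p1, fst p2 @ replicate b x @ snd p2] @ drop (Suc i) (blk x LRs ks)"
  using assms unfolding blk_def by (simp add: zip_append take_zip drop_zip take_map drop_map split_def)

lemma blk_len[simp]: "length (blk x LRs ks) = min (length LRs) (length ks)"
  by (simp add: blk_def)

lemma blk_nth: "j < length LRs \<Longrightarrow> j < length ks \<Longrightarrow>
  blk x LRs ks ! j = fst (LRs ! j) @ replicate (ks ! j) x @ snd (LRs ! j)"
  by (simp add: blk_def split_def)




definition gapfree :: "nat \<Rightarrow> word list \<Rightarrow> bool" where
  "gapfree x bs \<longleftrightarrow> (\<forall>j<length bs. \<exists>L R. bs ! j = L @ replicate (count_list (bs ! j) x) x @ R \<and> x \<notin> set L \<and> x \<notin> set R)"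

definition dec :: "nat \<Rightarrow> word list \<Rightarrow> (word \<times> word) list \<Rightarrow> nat set \<Rightarrow> bool" where
  "dec x bs LRs J \<longleftrightarrow> length LRs = length bs \<and> (\<forall>j<length bs. j \<in> J \<longrightarrow>
     bs ! j = fst (LRs ! j) @ replicate (count_list (bs ! j) x) x @ snd (LRs ! j) \<and>
     x \<notin> set (fst (LRs ! j)) \<and> x \<notin> set (snd (LRs ! j)))"

lemma choose_list:
  assumes "\<forall>j<n. \<exists>p. P j p"
  shows "\<exists>ps. length ps = n \<and> (\<forall>j<n. P j (ps ! j))"
proof -
  from assms obtain f where "\<forall>j<n. P j (f j)" by metis
  then show ?thesis by (intro exI[of _ "map f [0..<n]"]) auto
qed

lemma dec_exists:
  assumes "\<forall>j<length bs. j \<in> J \<longrightarrow> (\<exists>L R. bs ! j = L @ replicate (count_list (bs ! j) x) x @ R \<and> x \<notin> set L \<and> x \<notin> set R)"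
  shows "\<exists>LRs. dec x bs LRs J"
proof -
  have "\<forall>j<length bs. \<exists>p. j \<in> J \<longrightarrow> (bs ! j = fst p @ replicate (count_list (bs ! j) x) x @ snd p \<and> x \<notin> set (fst p) \<and> x \<notin> set (snd p))"
    using assms by fastforce
  from choose_list[OF this] show ?thesis unfolding dec_def by auto
qed

lemma count_le1_form:
  assumes "count_list B x \<le> 1"
  shows "\<exists>L R. B = L @ replicate (count_list B x) x @ R \<and> x \<notin> set L \<and> x \<notin> set R"
proof (cases "count_list B x = 0")
  case True
  then show ?thesis by (intro exI[of _ B] exI[of _ "[]"]) (simp add: count_list_0_iff)
next
  case False
  then have c1: "count_list B x = 1" using assms by simp
  then have "x \<in> set B" using count_pos_iff[of B x] by simp
  then obtain L R where B: "B = L @ x # R" and xL: "x \<notin> set L" by (metis split_list_first)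
  then have "count_list R x = 0" using c1 by simp
  then show ?thesis using B xL c1 by (intro exI[of _ L] exI[of _ R]) (simp add: count_list_0_iff)
qed

lemma count2_form:
  assumes "count_list B x = 2"
  shows "\<exists>L Q R. B = L @ [x] @ Q @ [x] @ R \<and> x \<notin> set L \<and> x \<notin> set Q \<and> x \<notin> set R"
proof -
  have "x \<in> set B" using assms count_pos_iff[of B x] by simp
  then obtain L B' where B: "B = L @ x # B'" and xL: "x \<notin> set L" by (metis split_list_first)
  then have c: "count_list B' x = 1" using assms by (simp add: count_list_0_iff)
  then have "x \<in> set B'" using count_pos_iff[of B' x] by simp
  then obtain Q R where B': "B' = Q @ x # R" and xQ: "x \<notin> set Q" by (metis split_list_first)
  then have "count_list R x = 0" using c by (simp add: count_list_0_iff)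
  then show ?thesis using B B' xL xQ by (intro exI[of _ L] exI[of _ Q] exI[of _ R]) (simp add: count_list_0_iff)
qed

definition fst_idx :: "nat list \<Rightarrow> nat" where
  "fst_idx cs = (LEAST i. i < length cs \<and> 0 < cs ! i)"

lemma fst_idx_props:
  assumes "j < length cs" "0 < cs ! j"
  shows "fst_idx cs < length cs" "0 < cs ! fst_idx cs" "fst_idx cs \<le> j" "\<forall>k<fst_idx cs. cs ! k = 0"
proof -
  have P: "fst_idx cs < length cs \<and> 0 < cs ! fst_idx cs" unfolding fst_idx_def
    by (rule LeastI[of _ j]) (use assms in simp)
  then show "fst_idx cs < length cs" "0 < cs ! fst_idx cs" by auto
  show "fst_idx cs \<le> j" unfolding fst_idx_def by (rule Least_le) (use assms in simp)
  show "\<forall>k<fst_idx cs. cs ! k = 0"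
  proof (intro allI impI)
    fix k assume k: "k < fst_idx cs"
    then have "\<not> (k < length cs \<and> 0 < cs ! k)" unfolding fst_idx_def by (rule not_less_Least)
    then show "cs ! k = 0" using k P by simp
  qed
qed

lemma xc_props:
  assumes "xc cs" "j < length cs"
  shows "cs ! j \<le> (if j = fst_idx cs then 2 else 1)"
  using assms unfolding xc_def fst_idx_def Let_def by auto

lemma xc_iff: "xc cs \<longleftrightarrow> (\<forall>j<length cs. cs ! j \<le> (if j = fst_idx cs then 2 else 1))"
  unfolding xc_def fst_idx_def Let_def by auto

lemma not_gapfree:
  assumes ng: "\<not> gapfree x bs" and xc: "xc (cnt bs x)"
  shows "fst_idx (cnt bs x) < length bs \<and> count_list (bs ! fst_idx (cnt bs x)) x = 2 \<and>
    (\<forall>j<length bs. j \<noteq> fst_idx (cnt bs x) \<longrightarrow> count_list (bs ! j) x \<le> 1) \<and>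
    (\<forall>j<fst_idx (cnt bs x). count_list (bs ! j) x = 0)"
proof -
  let ?i = "fst_idx (cnt bs x)"
  obtain j where j: "j < length bs" and nj: "\<not> (\<exists>L R. bs ! j = L @ replicate (count_list (bs ! j) x) x @ R \<and> x \<notin> set L \<and> x \<notin> set R)"
    using ng unfolding gapfree_def by blast
  have c: "\<not> count_list (bs ! j) x \<le> 1"
  proof
    assume "count_list (bs ! j) x \<le> 1"
    then have "\<exists>L R. bs ! j = L @ replicate (count_list (bs ! j) x) x @ R \<and> x \<notin> set L \<and> x \<notin> set R"
      by (rule count_le1_form)
    with nj show False by blast
  qed
  have jl: "j < length (cnt bs x)" "0 < cnt bs x ! j" using j c by (auto simp: cnt_def)
  note fp = fst_idx_props[OF jl]
  have le: "\<And>k. k < length bs \<Longrightarrow> count_list (bs ! k) x \<le> (if k = ?i then 2 else 1)"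
  proof -
    fix k assume k: "k < length bs"
    have "cnt bs x ! k \<le> (if k = ?i then 2 else 1)" by (rule xc_props[OF xc]) (use k in \<open>simp add: cnt_def\<close>)
    then show "count_list (bs ! k) x \<le> (if k = ?i then 2 else 1)" using k by (simp add: cnt_def)
  qed
  have ji: "j = ?i"
  proof (rule ccontr)
    assume "j \<noteq> ?i"
    then have "count_list (bs ! j) x \<le> 1" using le[OF j] by simp
    then show False using c by simp
  qed
  have c2: "count_list (bs ! ?i) x = 2" using le[OF j] c ji by simp
  have a1: "?i < length bs" using fp(1) by (simp add: cnt_def)
  have a3: "\<forall>k<length bs. k \<noteq> ?i \<longrightarrow> count_list (bs ! k) x \<le> 1"
  proof (intro allI impI)
    fix k assume "k < length bs" "k \<noteq> ?i"
    then show "count_list (bs ! k) x \<le> 1" using le[of k] by simp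
  qed
  have a4: "\<forall>k<?i. count_list (bs ! k) x = 0"
  proof (intro allI impI)
    fix k assume k: "k < ?i"
    then have "cnt bs x ! k = 0" using fp(4) by blast
    then show "count_list (bs ! k) x = 0" using k a1 by (simp add: cnt_def)
  qed
  show ?thesis using a1 c2 a3 a4 by blast
qed

lemma good_new:
  assumes g: "good bs ts" and tx: "x \<notin> set ts" and l: "length bs' = length bs"
    and f: "\<forall>j<length bs. filter (\<lambda>c. c \<noteq> x) (bs' ! j) = filter (\<lambda>c. c \<noteq> x) (bs ! j)"
    and sx: "sum_list (cnt bs' x) \<noteq> 1"
  shows "good bs' ts"
proof -
  have sub: "\<forall>j<length bs. set (bs' ! j) \<subseteq> set (bs ! j) \<union> {x}"
  proof (intro allI impI)
    fix j assume j: "j < length bs"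
    have "set (filter (\<lambda>c. c \<noteq> x) (bs' ! j)) \<subseteq> set (bs ! j)" using f j by (metis filter_is_subset)
    then show "set (bs' ! j) \<subseteq> set (bs ! j) \<union> {x}" by auto
  qed
  have d: "\<forall>B\<in>set bs'. set B \<inter> set ts = {}"
  proof
    fix B assume "B \<in> set bs'"
    then obtain j where j: "j < length bs" "B = bs' ! j" using l by (metis in_set_conv_nth)
    then have "set (bs ! j) \<inter> set ts = {}" using g by (auto simp: good_def)
    then show "set B \<inter> set ts = {}" using sub j tx by auto
  qed
  have cy: "\<And>y. y \<noteq> x \<Longrightarrow> map (\<lambda>B. count_list B y) bs' = map (\<lambda>B. count_list B y) bs"
  proof -
    fix y assume y: "y \<noteq> x"
    show "map (\<lambda>B. count_list B y) bs' = map (\<lambda>B. count_list B y) bs"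
    proof (rule nth_equalityI)
      show "length (map (\<lambda>B. count_list B y) bs') = length (map (\<lambda>B. count_list B y) bs)" using l by simp
    next
      fix j assume "j < length (map (\<lambda>B. count_list B y) bs')"
      then have j: "j < length bs" using l by simp
      have "count_list (bs' ! j) y = count_list (filter (\<lambda>c. c \<noteq> x) (bs' ! j)) y" using y by (simp add: count_filter)
      also have "\<dots> = count_list (bs ! j) y" using f j y by (simp add: count_filter)
      finally show "map (\<lambda>B. count_list B y) bs' ! j = map (\<lambda>B. count_list B y) bs ! j" using j l by simp
    qed
  qed
  have s: "\<forall>y. sum_list (map (\<lambda>B. count_list B y) bs') \<noteq> 1"
  proof
    fix y show "sum_list (map (\<lambda>B. count_list B y) bs') \<noteq> 1"
    proof (cases "y = x")
      case True then show ?thesis using sx by (simp add: cnt_def)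
    next
      case False then show ?thesis using cy[OF False] g by (simp add: good_def)
    qed
  qed
  show ?thesis using g l d s by (simp add: good_def)
qed

lemma cnt_other:
  assumes l: "length bs' = length bs" and f: "\<forall>j<length bs. filter (\<lambda>c. c \<noteq> x) (bs' ! j) = filter (\<lambda>c. c \<noteq> x) (bs ! j)"
    and y: "y \<noteq> x"
  shows "cnt bs' y = cnt bs y"
proof (rule nth_equalityI)
  show "length (cnt bs' y) = length (cnt bs y)" using l by (simp add: cnt_def)
next
  fix j assume "j < length (cnt bs' y)"
  then have j: "j < length bs" using l by (simp add: cnt_def)
  have "count_list (bs' ! j) y = count_list (filter (\<lambda>c. c \<noteq> x) (bs' ! j)) y" using y by (simp add: count_filter)
  also have "\<dots> = count_list (bs ! j) y" using f j y by (simp add: count_filter)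
  finally show "cnt bs' y ! j = cnt bs y ! j" using j l by (simp add: cnt_def)
qed

lemma count_rep[simp]: "count_list (replicate k x) x = k"
  by (induction k) auto

lemma filter_rep[simp]: "filter (\<lambda>c. c = x) B = replicate (count_list B x) x"
  by (induction B) auto

lemma pat_restr:
  assumes g: "good bs ts" and tx: "x \<notin> set ts"
  shows "restr (ilv bs ts) (insert x (set ts)) = pat x (cnt bs x) ts"
proof -
  have "restr (ilv bs ts) (insert x (set ts)) =
     ilvw (map (\<lambda>b. restr b (insert x (set ts))) bs) (map (\<lambda>c. restr c (insert x (set ts))) (map (\<lambda>t. [t]) ts))"
    unfolding ilv_def by (rule restr_ilvw)
  moreover have "map (\<lambda>b. restr b (insert x (set ts))) bs = map (\<lambda>k. replicate k x) (cnt bs x)"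
  proof -
    have "\<forall>b\<in>set bs. restr b (insert x (set ts)) = replicate (count_list b x) x"
    proof
      fix b assume "b \<in> set bs"
      then have "set b \<inter> set ts = {}" using g by (auto simp: good_def)
      then have "restr b (insert x (set ts)) = filter (\<lambda>c. c = x) b"
        unfolding restr_def by (intro filter_cong) auto
      then show "restr b (insert x (set ts)) = replicate (count_list b x) x" by simp
    qed
    then show ?thesis by (simp add: cnt_def)
  qed
  moreover have "map (\<lambda>c. restr c (insert x (set ts))) (map (\<lambda>t. [t]) ts) = map (\<lambda>t. [t]) ts"
    by (induction ts) (auto simp: restr_def)
  ultimately show ?thesis by (simp only: pat_def)
qed

lemma blk_filter:
  assumes "x \<notin> set L" "x \<notin> set R"
  shows "filter (\<lambda>c. c \<noteq> x) (L @ replicate k x @ R) = filter (\<lambda>c. c \<noteq> x) L @ filter (\<lambda>c. c \<noteq> x) R"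
  by simp

lemma count_blk1:
  assumes "x \<notin> set L" "x \<notin> set R"
  shows "count_list (L @ replicate k x @ R) x = k"
  using assms by (simp add: count_list_0_iff)

lemma GF:
  assumes g: "good bs ts" and tx: "x \<notin> set ts" and gf: "gapfree x bs"
    and lf: "length fs = length bs"
    and h: "holds M (pat x (cnt bs x) ts) (pat x fs ts)"
  shows "\<exists>bs'. derives (Gamma M) (ilv bs ts) (ilv bs' ts) \<and> length bs' = length bs \<and>
     (\<forall>j<length bs. filter (\<lambda>c. c \<noteq> x) (bs' ! j) = filter (\<lambda>c. c \<noteq> x) (bs ! j)) \<and> cnt bs' x = fs"
proof -
  obtain LRs where D: "dec x bs LRs UNIV"
    using dec_exists[of bs UNIV x] gf unfolding gapfree_def by auto
  have lL: "length LRs = length bs" using D by (simp add: dec_def)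
  have l: "length bs = Suc (length ts)" using g by (simp add: good_def)
  have bsb: "bs = blk x LRs (cnt bs x)"
  proof (rule nth_equalityI)
    show "length bs = length (blk x LRs (cnt bs x))" using lL by (simp add: cnt_def)
  next
    fix j assume "j < length bs"
    then show "bs ! j = blk x LRs (cnt bs x) ! j" using D lL by (simp add: blk_nth dec_def cnt_def)
  qed
  have dv: "derives (Gamma M) (ilvw (blk x LRs (cnt bs x)) (map (\<lambda>t. [t]) ts)) (ilvw (blk x LRs fs) (map (\<lambda>t. [t]) ts))"
    by (rule lift[OF tx]) (use g l lL lf h in \<open>auto simp: good_def cnt_def\<close>)
  let ?bs' = "blk x LRs fs"
  have l': "length ?bs' = length bs" using lL lf by simp
  have f: "\<forall>j<length bs. filter (\<lambda>c. c \<noteq> x) (?bs' ! j) = filter (\<lambda>c. c \<noteq> x) (bs ! j)"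
  proof (intro allI impI)
    fix j assume j: "j < length bs"
    have e: "bs ! j = fst (LRs ! j) @ replicate (count_list (bs ! j) x) x @ snd (LRs ! j)"
      using D j by (auto simp: dec_def)
    have "filter (\<lambda>c. c \<noteq> x) (bs ! j) = filter (\<lambda>c. c \<noteq> x) (fst (LRs ! j)) @ filter (\<lambda>c. c \<noteq> x) (snd (LRs ! j))"
      by (subst e) simp
    moreover have "filter (\<lambda>c. c \<noteq> x) (?bs' ! j) = filter (\<lambda>c. c \<noteq> x) (fst (LRs ! j)) @ filter (\<lambda>c. c \<noteq> x) (snd (LRs ! j))"
      using j lL lf by (simp add: blk_nth)
    ultimately show "filter (\<lambda>c. c \<noteq> x) (?bs' ! j) = filter (\<lambda>c. c \<noteq> x) (bs ! j)" by simp
  qed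
  have c: "cnt ?bs' x = fs"
  proof (rule nth_equalityI)
    show "length (cnt ?bs' x) = length fs" using l' lf by (simp add: cnt_def)
  next
    fix j assume "j < length (cnt ?bs' x)"
    then have j: "j < length bs" using l' by (simp add: cnt_def del: blk_len)
    have "x \<notin> set (fst (LRs ! j))" "x \<notin> set (snd (LRs ! j))" using D j by (auto simp: dec_def)
    then show "cnt ?bs' x ! j = fs ! j" using j lL lf by (simp add: cnt_def blk_nth count_list_0_iff)
  qed
  show ?thesis using dv bsb l' f c unfolding ilv_def by (intro exI[of _ ?bs']) auto
qed




lemma trick:
  assumes E0: "Sigma0 \<subseteq> E0" "Gamma M \<subseteq> E0"
    and g: "good bs ts" and tx: "x \<notin> set ts" and tz: "z \<notin> set ts" "z \<noteq> x"
    and i: "i < length bs" and bi: "bs ! i = L @ [x] @ Q @ [x] @ R"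
    and xL: "x \<notin> set L" and xQ: "x \<notin> set Q" and xR: "x \<notin> set R"
    and D: "dec x bs LRs (- {i})"
    and lf: "length fs = length bs"
    and h: "holds M (pat x (cnt bs x) ts) (pat x fs ts)"
  shows "derives E0 (ilv bs ts) (ilv ((blk x LRs fs)[i := L @ [x] @ Q @ replicate (fs ! i) x @ R]) ts)"
proof -
  let ?C = "map (\<lambda>t. [t]) ts"
  let ?e = "cnt bs x"
  have l: "length bs = Suc (length ts)" using g by (simp add: good_def)
  have lC: "length bs = Suc (length ?C)" using l by simp
  have lL: "length LRs = length bs" using D by (simp add: dec_def)
  have le: "length ?e = length bs" by (simp add: cnt_def)
  have ei: "?e ! i = 2" using i bi xL xQ xR by (simp add: cnt_def count_list_0_iff)
  define B2 where "B2 = L @ [x] @ Q @ [x, x] @ R"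
  have w0: "ilv bs ts = pre i bs ?C @ bs ! i @ suf i bs ?C"
    unfolding ilv_def by (rule ilvw_decomp[OF i lC])
  have s1: "derives E0 ((pre i bs ?C @ L @ [x] @ Q) @ [x] @ (R @ suf i bs ?C))
                       ((pre i bs ?C @ L @ [x] @ Q) @ [x, x] @ (R @ suf i bs ?C))"
    by (rule D1[OF E0(1)]) simp
  have w1: "ilvw (bs[i := B2]) ?C = (pre i bs ?C @ L @ [x] @ Q) @ [x, x] @ (R @ suf i bs ?C)"
    using ilvw_upd[OF i lC, of B2] unfolding B2_def by simp
  have d1: "derives E0 (ilv bs ts) (ilvw (bs[i := B2]) ?C)"
    using s1 w0 w1 bi by simp
  have bsb: "bs[i := B2] = (blk x LRs ?e)[i := B2]"
  proof (rule nth_equalityI)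
    show "length (bs[i := B2]) = length ((blk x LRs ?e)[i := B2])" using lL le by simp
  next
    fix j assume "j < length (bs[i := B2])"
    then have j: "j < length bs" by simp
    show "bs[i := B2] ! j = (blk x LRs ?e)[i := B2] ! j"
    proof (cases "j = i")
      case True then show ?thesis using j lL le by simp
    next
      case False
      then have "bs ! j = fst (LRs ! j) @ replicate (count_list (bs ! j) x) x @ snd (LRs ! j)"
        using D j by (auto simp: dec_def)
      then show ?thesis using False j lL le by (simp add: blk_nth cnt_def)
    qed
  qed
  let ?LRs' = "take i LRs @ [(L, []), ([], R)] @ drop (Suc i) LRs"
  let ?C' = "take i ?C @ [Q] @ drop i ?C"
  let ?ts' = "take i ts @ [z] @ drop i ts"
  let ?ks = "take i ?e @ [1, 2] @ drop (Suc i) ?e"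
  let ?ks' = "take i fs @ [1, fs ! i] @ drop (Suc i) fs"
  have iL: "i < length LRs" using i lL by simp
  have gen: "\<And>ff. length ff = length bs \<Longrightarrow>
     ilvw (blk x ?LRs' (take i ff @ [1, ff ! i] @ drop (Suc i) ff)) ?C'
       = ilvw ((blk x LRs ff)[i := L @ [x] @ Q @ replicate (ff ! i) x @ R]) ?C"
  proof -
    fix ff :: "nat list" assume lff: "length ff = length bs"
    have lb: "i < length (blk x LRs ff)" "length (blk x LRs ff) = Suc (length ?C)" using i lL lff l by auto
    have "blk x ?LRs' (take i ff @ [1, ff ! i] @ drop (Suc i) ff)
        = take i (blk x LRs ff) @ [L @ [x], replicate (ff ! i) x @ R] @ drop (Suc i) (blk x LRs ff)"
      using blk_split[OF iL, of ff x "(L, [])" "([], R)" 1 "ff ! i"] lL lff by simp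
    then have "ilvw (blk x ?LRs' (take i ff @ [1, ff ! i] @ drop (Suc i) ff)) ?C'
        = pre i (blk x LRs ff) ?C @ (L @ [x]) @ Q @ (replicate (ff ! i) x @ R) @ suf i (blk x LRs ff) ?C"
      using ilvw_split2[OF lb, of "L @ [x]" "replicate (ff ! i) x @ R" Q] by simp
    also have "\<dots> = ilvw ((blk x LRs ff)[i := L @ [x] @ Q @ replicate (ff ! i) x @ R]) ?C"
      using ilvw_upd[OF lb, of "L @ [x] @ Q @ replicate (ff ! i) x @ R"] by simp
    finally show "ilvw (blk x ?LRs' (take i ff @ [1, ff ! i] @ drop (Suc i) ff)) ?C'
       = ilvw ((blk x LRs ff)[i := L @ [x] @ Q @ replicate (ff ! i) x @ R]) ?C" .
  qed
  have g1: "ilvw (blk x ?LRs' ?ks) ?C' = ilvw (bs[i := B2]) ?C"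
    using gen[OF le] ei bsb unfolding B2_def by (simp add: numeral_2_eq_2)
  have g2: "ilvw (blk x ?LRs' ?ks') ?C' = ilv ((blk x LRs fs)[i := L @ [x] @ Q @ replicate (fs ! i) x @ R]) ts"
    using gen[OF lf] unfolding ilv_def by simp
  let ?E = "map (\<lambda>k. replicate k x) ?e" and ?F = "map (\<lambda>k. replicate k x) fs"
  have hEF: "holds M (ilvw ?E ?C) (ilvw ?F ?C)" using h unfolding pat_def .
  have nb: "\<forall>b\<in>set ?E \<union> set ?F. set b \<inter> set ts = {}" using tx by auto
  have hins: "holds M (ilvw (?E[i := [x, z] @ ?E ! i]) ?C) (ilvw (?F[i := [x, z] @ ?F ! i]) ?C)"
    by (rule holds_ins[OF hEF]) (use g i l le lf nb in \<open>auto simp: good_def\<close>)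
  have p1: "pat x ?ks ?ts' = ilvw (?E[i := [x, z] @ ?E ! i]) ?C"
    using pat_split[of i ?e ts x 1 2 z] i le l ei by (simp add: numeral_2_eq_2)
  have p2: "pat x ?ks' ?ts' = ilvw (?F[i := [x, z] @ ?F ! i]) ?C"
    using pat_split[of i fs ts x 1 "fs ! i" z] i lf l by simp
  have hp: "holds M (pat x ?ks ?ts') (pat x ?ks' ?ts')" using hins p1 p2 by simp
  have dts: "distinct ?ts'"
  proof -
    have "distinct ts" using g by (simp add: good_def)
    then have "distinct (take i ts @ drop i ts)" by simp
    moreover have "set (take i ts) \<inter> set (drop i ts) = {}"
      using \<open>distinct ts\<close> by (metis append_take_drop_id distinct_append)
    moreover have "z \<notin> set (take i ts)" "z \<notin> set (drop i ts)" using tz by (auto dest: in_set_takeD in_set_dropD)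
    ultimately show ?thesis by auto
  qed
  have xts': "x \<notin> set ?ts'" using tx tz by (auto dest: in_set_takeD in_set_dropD)
  have d2: "derives (Gamma M) (ilvw (blk x ?LRs' ?ks) ?C') (ilvw (blk x ?LRs' ?ks') ?C')"
    by (rule lift[OF xts' dts _ _ _ _ hp]) (use i l lL le lf in auto)
  have d2': "derives E0 (ilvw (bs[i := B2]) ?C) (ilv ((blk x LRs fs)[i := L @ [x] @ Q @ replicate (fs ! i) x @ R]) ts)"
    using derives_mono[OF d2 E0(2)] g1 g2 by simp
  show ?thesis by (rule derives.trans[OF d1 d2'])
qed




lemma sound0:
  assumes "\<forall>(s, t)\<in>Sigma0. holds M s t" "derives (Sigma0 \<union> Gamma M) u v"
  shows "holds M u v"
  by (rule derives_sound[OF assms(2)]) (use assms(1) in \<open>auto simp: Gamma_def\<close>)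

lemma dec_off:
  assumes D: "dec x bs LRs (- {i})" and j: "j < length bs" "j \<noteq> i" and lf: "length fs = length bs"
  shows "(blk x LRs fs)[i := B] ! j = fst (LRs ! j) @ replicate (fs ! j) x @ snd (LRs ! j) \<and>
    filter (\<lambda>c. c \<noteq> x) ((blk x LRs fs)[i := B] ! j) = filter (\<lambda>c. c \<noteq> x) (bs ! j) \<and>
    count_list ((blk x LRs fs)[i := B] ! j) x = fs ! j \<and>
    x \<notin> set (fst (LRs ! j)) \<and> x \<notin> set (snd (LRs ! j))"
proof -
  have lL: "length LRs = length bs" using D by (simp add: dec_def)
  have e: "bs ! j = fst (LRs ! j) @ replicate (count_list (bs ! j) x) x @ snd (LRs ! j)"
    and xs: "x \<notin> set (fst (LRs ! j))" "x \<notin> set (snd (LRs ! j))" using D j by (auto simp: dec_def)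
  have n: "(blk x LRs fs)[i := B] ! j = fst (LRs ! j) @ replicate (fs ! j) x @ snd (LRs ! j)"
    using j lL lf by (simp add: blk_nth)
  have "filter (\<lambda>c. c \<noteq> x) (bs ! j) = filter (\<lambda>c. c \<noteq> x) (fst (LRs ! j)) @ filter (\<lambda>c. c \<noteq> x) (snd (LRs ! j))"
    by (subst e) simp
  then show ?thesis using n xs by (simp add: count_list_0_iff)
qed

lemma adjust:
  assumes sig: "\<forall>(s, t)\<in>Sigma0. holds M s t"
    and gW: "good bsW ts" and gT: "good bsT ts" and tx: "x \<notin> set ts"
    and hWT: "holds M (ilv bsW ts) (ilv bsT ts)"
    and xW: "xc (cnt bsW x)" and xT: "xc (cnt bsT x)"
    and cs: "gapfree x bsW \<or> \<not> gapfree x bsT"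
  shows "\<exists>bs'. derives (Sigma0 \<union> Gamma M) (ilv bsW ts) (ilv bs' ts) \<and> length bs' = length bsW \<and>
     (\<forall>j<length bsW. filter (\<lambda>c. c \<noteq> x) (bs' ! j) = filter (\<lambda>c. c \<noteq> x) (bsW ! j)) \<and> cnt bs' x = cnt bsT x"
proof -
  let ?E0 = "Sigma0 \<union> Gamma M"
  let ?C = "map (\<lambda>t. [t]) ts"
  let ?fs = "cnt bsT x"
  have lW: "length bsW = Suc (length ts)" using gW by (simp add: good_def)
  have lT: "length bsT = Suc (length ts)" using gT by (simp add: good_def)
  have lf: "length ?fs = length bsW" using lW lT by (simp add: cnt_def)
  have hpat: "holds M (pat x (cnt bsW x) ts) (pat x ?fs ts)"
    using holds_restr[OF hWT, of "insert x (set ts)"] pat_restr[OF gW tx] pat_restr[OF gT tx] by simp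
  show ?thesis
  proof (cases "gapfree x bsW")
    case True
    obtain bs' where "derives (Gamma M) (ilv bsW ts) (ilv bs' ts)" "length bs' = length bsW"
      "\<forall>j<length bsW. filter (\<lambda>c. c \<noteq> x) (bs' ! j) = filter (\<lambda>c. c \<noteq> x) (bsW ! j)" "cnt bs' x = ?fs"
      using GF[OF gW tx True lf hpat] by blast
    then show ?thesis using derives_mono[of "Gamma M" _ _ ?E0] by blast
  next
    case False
    then have nT: "\<not> gapfree x bsT" using cs by simp
    let ?i = "fst_idx (cnt bsW x)"
    let ?iT = "fst_idx ?fs"
    note NW = not_gapfree[OF False xW]
    note NT = not_gapfree[OF nT xT]
    have i: "?i < length bsW" using NW by blast
    have ci: "count_list (bsW ! ?i) x = 2" using NW by blast
    have cj: "\<forall>j<length bsW. j \<noteq> ?i \<longrightarrow> count_list (bsW ! j) x \<le> 1" using NW by blast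
    have iT: "?iT < length bsW" using NT lT lW by simp
    have fiT: "?fs ! ?iT = 2" using NT by (simp add: cnt_def)
    have fj: "\<forall>j<length bsW. j \<noteq> ?iT \<longrightarrow> ?fs ! j \<le> 1" using NT lT lW by (simp add: cnt_def)
    have fbefore: "\<forall>j<?iT. ?fs ! j = 0" using NT iT lT lW by (simp add: cnt_def)
    obtain L Q R where bi: "bsW ! ?i = L @ [x] @ Q @ [x] @ R" and xL: "x \<notin> set L" and xQ: "x \<notin> set Q" and xR: "x \<notin> set R"
      using count2_form[OF ci] by blast
    have fL: "filter (\<lambda>c. c \<noteq> x) L = L" using xL by (auto simp: filter_id_conv)
    have fQ: "filter (\<lambda>c. c \<noteq> x) Q = Q" using xQ by (auto simp: filter_id_conv)
    have fR: "filter (\<lambda>c. c \<noteq> x) R = R" using xR by (auto simp: filter_id_conv)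
    have "\<forall>j<length bsW. j \<in> - {?i} \<longrightarrow> (\<exists>L R. bsW ! j = L @ replicate (count_list (bsW ! j) x) x @ R \<and> x \<notin> set L \<and> x \<notin> set R)"
    proof (intro allI impI)
      fix j assume j: "j < length bsW" "j \<in> - {?i}"
      then have "count_list (bsW ! j) x \<le> 1" using cj by simp
      then show "\<exists>L R. bsW ! j = L @ replicate (count_list (bsW ! j) x) x @ R \<and> x \<notin> set L \<and> x \<notin> set R"
        by (rule count_le1_form)
    qed
    then obtain LRs where D: "dec x bsW LRs (- {?i})" using dec_exists by blast
    obtain z where z: "z \<notin> insert x (set ts)" using ex_new_if_finite[OF infinite_UNIV_nat, of "insert x (set ts)"] by blast
    define bs1 where "bs1 = (blk x LRs ?fs)[?i := L @ [x] @ Q @ replicate (?fs ! ?i) x @ R]"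
    have d1: "derives ?E0 (ilv bsW ts) (ilv bs1 ts)"
      unfolding bs1_def by (rule trick[OF _ _ gW tx _ _ i bi xL xQ xR D lf hpat]) (use z in auto)
    have lL: "length LRs = length bsW" using D by (simp add: dec_def)
    have l1: "length bs1 = length bsW" unfolding bs1_def using lL lf by simp
    have b1i: "bs1 ! ?i = L @ [x] @ Q @ replicate (?fs ! ?i) x @ R" unfolding bs1_def using i lL lf by simp
    have off: "\<And>j B. j < length bsW \<Longrightarrow> j \<noteq> ?i \<Longrightarrow> bs1[?i := B] ! j = bs1 ! j" by simp
    have offp: "\<And>j. j < length bsW \<Longrightarrow> j \<noteq> ?i \<Longrightarrow>
      bs1 ! j = fst (LRs ! j) @ replicate (?fs ! j) x @ snd (LRs ! j) \<and>
      filter (\<lambda>c. c \<noteq> x) (bs1 ! j) = filter (\<lambda>c. c \<noteq> x) (bsW ! j) \<and>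
      count_list (bs1 ! j) x = ?fs ! j \<and> x \<notin> set (fst (LRs ! j)) \<and> x \<notin> set (snd (LRs ! j))"
      unfolding bs1_def using dec_off[OF D _ _ lf] by blast
    have fW: "filter (\<lambda>c. c \<noteq> x) (bsW ! ?i) = L @ Q @ R"
      using bi fL fQ fR by simp
    have fin: "\<And>B. filter (\<lambda>c. c \<noteq> x) B = L @ Q @ R \<Longrightarrow> count_list B x = ?fs ! ?i \<Longrightarrow>
        length (bs1[?i := B]) = length bsW \<and>
        (\<forall>j<length bsW. filter (\<lambda>c. c \<noteq> x) (bs1[?i := B] ! j) = filter (\<lambda>c. c \<noteq> x) (bsW ! j)) \<and>
        cnt (bs1[?i := B]) x = ?fs"
    proof -
      fix B assume fB: "filter (\<lambda>c. c \<noteq> x) B = L @ Q @ R" and cB: "count_list B x = ?fs ! ?i"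
      have a: "length (bs1[?i := B]) = length bsW" using l1 by simp
      have b: "\<forall>j<length bsW. filter (\<lambda>c. c \<noteq> x) (bs1[?i := B] ! j) = filter (\<lambda>c. c \<noteq> x) (bsW ! j)"
      proof (intro allI impI)
        fix j assume j: "j < length bsW"
        show "filter (\<lambda>c. c \<noteq> x) (bs1[?i := B] ! j) = filter (\<lambda>c. c \<noteq> x) (bsW ! j)"
        proof (cases "j = ?i")
          case True then show ?thesis using fB fW l1 j by simp
        next
          case False
          have "filter (\<lambda>c. c \<noteq> x) (bs1 ! j) = filter (\<lambda>c. c \<noteq> x) (bsW ! j)" using offp[OF j False] by blast
          then show ?thesis using False by simp
        qed
      qed
      have c: "cnt (bs1[?i := B]) x = ?fs"
      proof (rule nth_equalityI)
        show "length (cnt (bs1[?i := B]) x) = length ?fs" using a lf by (simp add: cnt_def)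
      next
        fix j assume "j < length (cnt (bs1[?i := B]) x)"
        then have j: "j < length bsW" using a by (simp add: cnt_def)
        show "cnt (bs1[?i := B]) x ! j = ?fs ! j"
        proof (cases "j = ?i")
          case True then show ?thesis using cB l1 j by (simp add: cnt_def)
        next
          case False
          have "count_list (bs1 ! j) x = ?fs ! j" using offp[OF j False] by blast
          then show ?thesis using False l1 j by (simp add: cnt_def)
        qed
      qed
      show "length (bs1[?i := B]) = length bsW \<and>
        (\<forall>j<length bsW. filter (\<lambda>c. c \<noteq> x) (bs1[?i := B] ! j) = filter (\<lambda>c. c \<noteq> x) (bsW ! j)) \<and>
        cnt (bs1[?i := B]) x = ?fs" using a b c by blast
    qed
    have l1C: "length bs1 = Suc (length ?C)" using l1 lW by simp
    have i1: "?i < length bs1" using i l1 by simp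
    have w1: "ilv bs1 ts = pre ?i bs1 ?C @ bs1 ! ?i @ suf ?i bs1 ?C"
      unfolding ilv_def by (rule ilvw_decomp[OF i1 l1C])
    have w2: "\<And>B. ilv (bs1[?i := B]) ts = pre ?i bs1 ?C @ B @ suf ?i bs1 ?C"
      unfolding ilv_def by (rule ilvw_upd[OF i1 l1C])
    have fi2: "?fs ! ?i \<le> 2" using fj fiT i by (cases "?i = ?iT") auto
    have s1: "sum_list (cnt bs1 x) \<noteq> 1"
    proof -
      have "?iT < length (cnt bs1 x)" using iT l1 by (simp add: cnt_def)
      moreover have "2 \<le> cnt bs1 x ! ?iT"
      proof (cases "?iT = ?i")
        case True then show ?thesis using b1i fiT xL xQ xR i l1 by (simp add: cnt_def count_list_0_iff)
      next
        case False
        have "count_list (bs1 ! ?iT) x = ?fs ! ?iT" using offp[OF iT False] by blast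
        then show ?thesis using fiT iT l1 by (simp add: cnt_def)
      qed
      ultimately have "2 \<le> sum_list (cnt bs1 x)" using elem_le_sum_list[of ?iT "cnt bs1 x"] by simp
      then show ?thesis by simp
    qed
    have fb1: "\<forall>j<length bsW. filter (\<lambda>c. c \<noteq> x) (bs1 ! j) = filter (\<lambda>c. c \<noteq> x) (bsW ! j)"
    proof (intro allI impI)
      fix j assume j: "j < length bsW"
      show "filter (\<lambda>c. c \<noteq> x) (bs1 ! j) = filter (\<lambda>c. c \<noteq> x) (bsW ! j)"
      proof (cases "j = ?i")
        case True then show ?thesis using b1i fW fL fQ fR by simp
      next
        case False then show ?thesis using offp[OF j False] by blast
      qed
    qed
    have g1: "good bs1 ts" by (rule good_new[OF gW tx l1 fb1 s1])
    consider "?fs ! ?i = 2" | "?fs ! ?i = 1" | "?fs ! ?i = 0" using fi2 by linarith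
    then show ?thesis
    proof cases
      case 1
      define B where "B = L @ [x] @ Q @ [x] @ R"
      have "derives ?E0 ((pre ?i bs1 ?C @ L @ [x] @ Q) @ [x, x] @ (R @ suf ?i bs1 ?C))
                        ((pre ?i bs1 ?C @ L @ [x] @ Q) @ [x] @ (R @ suf ?i bs1 ?C))"
        by (rule D1_rem) auto
      then have d2: "derives ?E0 (ilv bs1 ts) (ilv (bs1[?i := B]) ts)"
        using w1 w2[of B] b1i 1 unfolding B_def by (simp add: numeral_2_eq_2)
      have "filter (\<lambda>c. c \<noteq> x) B = L @ Q @ R" "count_list B x = ?fs ! ?i"
        using xL xQ xR 1 unfolding B_def by (simp_all add: fL fQ fR count_list_0_iff)
      from fin[OF this] show ?thesis using derives.trans[OF d1 d2] by blast
    next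
      case 2
      define B where "B = L @ Q @ [x] @ R"
      have iTi: "?iT < ?i"
      proof -
        have "?iT \<noteq> ?i" using 2 fiT by auto
        moreover have "?iT \<le> ?i"
          using fst_idx_props(3)[of ?i ?fs] 2 i lf by simp
        ultimately show ?thesis by simp
      qed
      have xpre: "x \<in> set (pre ?i bs1 ?C)"
      proof -
        have "set (bs1 ! ?iT) \<subseteq> set (pre ?i bs1 ?C)" by (rule set_pre[OF iTi i1 l1C])
        moreover have "count_list (bs1 ! ?iT) x = 2"
        proof -
          have "?iT \<noteq> ?i" using iTi by simp
          then have "count_list (bs1 ! ?iT) x = ?fs ! ?iT" using offp[OF iT] by blast
          then show ?thesis using fiT by simp
        qed
        ultimately show ?thesis using count_pos_iff[of "bs1 ! ?iT" x] by auto
      qed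
      have qm: "\<forall>y\<in>set Q. 2 \<le> count_list ((pre ?i bs1 ?C @ L) @ Q @ [x] @ (R @ suf ?i bs1 ?C)) y"
      proof
        fix y assume yQ: "y \<in> set Q"
        have e: "(pre ?i bs1 ?C @ L) @ Q @ [x] @ (R @ suf ?i bs1 ?C) = ilv (bs1[?i := B]) ts"
          using w2[of B] unfolding B_def by simp
        have "y \<in> set (bs1 ! ?i)" using b1i yQ by simp
        then have yts: "y \<notin> set ts" using g1 i1 unfolding good_def by (meson disjoint_iff nth_mem)
        have "good (bs1[?i := B]) ts"
        proof (rule good_new[OF gW tx])
          show "length (bs1[?i := B]) = length bsW" using l1 by simp
          have ff: "filter (\<lambda>c. c \<noteq> x) B = L @ Q @ R" "count_list B x = ?fs ! ?i"
            using xL xQ xR 2 unfolding B_def by (simp_all add: fL fQ fR count_list_0_iff)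
          note F = fin[OF ff]
          show "\<forall>j<length bsW. filter (\<lambda>c. c \<noteq> x) (bs1[?i := B] ! j) = filter (\<lambda>c. c \<noteq> x) (bsW ! j)"
            using F by blast
          have "cnt (bs1[?i := B]) x = ?fs" using F by blast
          moreover have "sum_list ?fs \<noteq> 1"
          proof -
            have "2 \<le> sum_list ?fs" using elem_le_sum_list[of ?iT ?fs] fiT iT lf by simp
            then show ?thesis by simp
          qed
          ultimately show "sum_list (cnt (bs1[?i := B]) x) \<noteq> 1" by simp
        qed
        then have se: "simp_letters (ilv (bs1[?i := B]) ts) = set ts" by (rule good_simp)
        have yin: "y \<in> set (ilv (bs1[?i := B]) ts)" using e yQ by (metis Un_iff set_append)
        have "count_list (ilv (bs1[?i := B]) ts) y \<noteq> 1"
        proof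
          assume "count_list (ilv (bs1[?i := B]) ts) y = 1"
          then have "y \<in> simp_letters (ilv (bs1[?i := B]) ts)" unfolding simp_letters_def by simp
          then show False using se yts by simp
        qed
        then have "2 \<le> count_list (ilv (bs1[?i := B]) ts) y"
          using count_ge2_iff[of "ilv (bs1[?i := B]) ts" y] yin by simp
        then show "2 \<le> count_list ((pre ?i bs1 ?C @ L) @ Q @ [x] @ (R @ suf ?i bs1 ?C)) y"
          using e by simp
      qed
      have "derives ?E0 ((pre ?i bs1 ?C @ L) @ [x] @ Q @ [x] @ (R @ suf ?i bs1 ?C))
                        ((pre ?i bs1 ?C @ L) @ Q @ [x] @ (R @ suf ?i bs1 ?C))"
        by (rule Gp_rem[OF _ _ qm]) (use xpre in auto)
      then have d2: "derives ?E0 (ilv bs1 ts) (ilv (bs1[?i := B]) ts)"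
        using w1 w2[of B] b1i 2 unfolding B_def by simp
      have "filter (\<lambda>c. c \<noteq> x) B = L @ Q @ R" "count_list B x = ?fs ! ?i"
        using xL xQ xR 2 unfolding B_def by (simp_all add: fL fQ fR count_list_0_iff)
      from fin[OF this] show ?thesis using derives.trans[OF d1 d2] by blast
    next
      case 3
      have gf1: "gapfree x bs1" unfolding gapfree_def
      proof (intro allI impI)
        fix j assume j: "j < length bs1"
        show "\<exists>L' R'. bs1 ! j = L' @ replicate (count_list (bs1 ! j) x) x @ R' \<and> x \<notin> set L' \<and> x \<notin> set R'"
        proof (cases "j = ?i")
          case True
          then show ?thesis using b1i 3 xL xQ xR
            by (intro exI[of _ L] exI[of _ "Q @ R"]) (simp add: count_list_0_iff)
        next
          case False
          have "bs1 ! j = fst (LRs ! j) @ replicate (?fs ! j) x @ snd (LRs ! j)"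
            "count_list (bs1 ! j) x = ?fs ! j" "x \<notin> set (fst (LRs ! j))" "x \<notin> set (snd (LRs ! j))"
            using offp[of j] j l1 False by auto
          then show ?thesis by (intro exI[of _ "fst (LRs ! j)"] exI[of _ "snd (LRs ! j)"]) simp
        qed
      qed
      have h1: "holds M (ilv bs1 ts) (ilv bsT ts)"
        using holds_trans[OF holds_sym[OF sound0[OF sig d1]] hWT] .
      have hp1: "holds M (pat x (cnt bs1 x) ts) (pat x ?fs ts)"
        using holds_restr[OF h1, of "insert x (set ts)"] pat_restr[OF g1 tx] pat_restr[OF gT tx] by simp
      obtain bs2 where d2: "derives (Gamma M) (ilv bs1 ts) (ilv bs2 ts)" and l2: "length bs2 = length bs1"
        and f2: "\<forall>j<length bs1. filter (\<lambda>c. c \<noteq> x) (bs2 ! j) = filter (\<lambda>c. c \<noteq> x) (bs1 ! j)"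
        and c2: "cnt bs2 x = ?fs"
        using GF[OF g1 tx gf1 _ hp1] l1 lf by auto
      have d: "derives ?E0 (ilv bsW ts) (ilv bs2 ts)"
        using derives.trans[OF d1 derives_mono[OF d2]] by blast
      show ?thesis using d l2 l1 f2 fb1 c2 by (intro exI[of _ bs2]) auto
    qed
  qed
qed




lemma two_occ:
  assumes "2 \<le> count_list B x"
  shows "\<exists>L Q R. B = L @ [x] @ Q @ [x] @ R"
proof -
  have "x \<in> set B" using assms count_pos_iff[of B x] by simp
  then obtain L B' where B: "B = L @ x # B'" and xL: "x \<notin> set L" by (metis split_list_first)
  then have "1 \<le> count_list B' x" using assms by (simp add: count_list_0_iff)
  then have "x \<in> set B'" using count_pos_iff[of B' x] by simp
  then obtain Q R where "B' = Q @ x # R" by (metis split_list)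
  then have "B = L @ [x] @ Q @ [x] @ R" using B by simp
  then show ?thesis by blast
qed

lemma three_occ:
  assumes "3 \<le> count_list B x"
  shows "\<exists>L Q1 Q R. B = L @ [x] @ Q1 @ [x] @ Q @ [x] @ R"
proof -
  have "x \<in> set B" using assms count_pos_iff[of B x] by simp
  then obtain L B' where B: "B = L @ x # B'" and xL: "x \<notin> set L" by (metis split_list_first)
  then have "2 \<le> count_list B' x" using assms by (simp add: count_list_0_iff)
  from two_occ[OF this] obtain Q1 Q R where "B' = Q1 @ [x] @ Q @ [x] @ R" by blast
  then have "B = L @ [x] @ Q1 @ [x] @ Q @ [x] @ R" using B by simp
  then show ?thesis by blast
qed

lemma compact_viol:
  assumes nc: "\<not> compact w"
  shows "\<exists>x a Q c. w = a @ [x] @ Q @ [x] @ c \<and> x \<in> set a \<and> set Q \<inter> simp_letters w = {}"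
proof -
  let ?bs = "blocks w" and ?ts = "restr w (simp_letters w)"
  let ?C = "map (\<lambda>t. [t]) ?ts"
  have g: "good ?bs ?ts" and wr: "ilv ?bs ?ts = w" using word_good[of w] by auto
  have l: "length ?bs = Suc (length ?C)" using g by (simp add: good_def)
  have st: "set ?ts = simp_letters w" using good_simp[OF g] wr by simp
  obtain x where "x \<in> mul_letters w" "\<not> x_compact w x" using nc unfolding compact_def by blast
  then have nxc: "\<not> xc (cnt ?bs x)" by (simp add: x_compact_cnt)
  let ?fi = "fst_idx (cnt ?bs x)"
  obtain j where j: "j < length ?bs" and cj: "\<not> count_list (?bs ! j) x \<le> (if j = ?fi then 2 else 1)"
    using nxc unfolding xc_iff by (auto simp: cnt_def)
  have jl: "j < length (cnt ?bs x)" "0 < cnt ?bs x ! j" using j cj by (auto simp: cnt_def split: if_splits)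
  note fp = fst_idx_props[OF jl]
  have dj: "set (?bs ! j) \<inter> simp_letters w = {}" using g j st unfolding good_def by auto
  have wd: "w = pre j ?bs ?C @ ?bs ! j @ suf j ?bs ?C"
    using ilvw_decomp[OF j l] wr unfolding ilv_def by simp
  show ?thesis
  proof (cases "j = ?fi")
    case False
    then have fij: "?fi < j" using fp(3) by simp
    have "2 \<le> count_list (?bs ! j) x" using cj False by simp
    from two_occ[OF this] obtain L Q R where B: "?bs ! j = L @ [x] @ Q @ [x] @ R" by blast
    have "x \<in> set (?bs ! ?fi)" using fp(1) fp(2) count_pos_iff[of "?bs ! ?fi" x] by (simp add: cnt_def)
    then have xp: "x \<in> set (pre j ?bs ?C)" using set_pre[OF fij j l] by auto
    have "w = (pre j ?bs ?C @ L) @ [x] @ Q @ [x] @ (R @ suf j ?bs ?C)" using wd B by simp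
    moreover have "set Q \<inter> simp_letters w = {}" using dj B by auto
    ultimately show ?thesis using xp
      by (intro exI[of _ x] exI[of _ "pre j ?bs ?C @ L"] exI[of _ Q] exI[of _ "R @ suf j ?bs ?C"]) simp
  next
    case True
    have "3 \<le> count_list (?bs ! j) x" using cj True by simp
    from three_occ[OF this] obtain L Q1 Q R where B: "?bs ! j = L @ [x] @ Q1 @ [x] @ Q @ [x] @ R" by blast
    have "w = (pre j ?bs ?C @ L @ [x] @ Q1) @ [x] @ Q @ [x] @ (R @ suf j ?bs ?C)" using wd B by simp
    moreover have "set Q \<inter> simp_letters w = {}" using dj B by auto
    ultimately show ?thesis
      by (intro exI[of _ x] exI[of _ "pre j ?bs ?C @ L @ [x] @ Q1"] exI[of _ Q] exI[of _ "R @ suf j ?bs ?C"]) simp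
  qed
qed

lemma compactify:
  assumes E: "Sigma0 \<subseteq> E"
  shows "\<exists>w'. derives E w w' \<and> compact w'"
proof (induction "length w" arbitrary: w rule: less_induct)
  case less
  show ?case
  proof (cases "compact w")
    case True then show ?thesis using derives.refl by blast
  next
    case False
    obtain x a Q c where w: "w = a @ [x] @ Q @ [x] @ c" and xa: "x \<in> set a" and dQ: "set Q \<inter> simp_letters w = {}"
      using compact_viol[OF False] by blast
    have qm: "\<forall>y\<in>set Q. 2 \<le> count_list (a @ Q @ [x] @ c) y"
    proof
      fix y assume yQ: "y \<in> set Q"
      show "2 \<le> count_list (a @ Q @ [x] @ c) y"
      proof (cases "y = x")
        case True
        have "1 \<le> count_list a x" "1 \<le> count_list Q x"
          using xa yQ True count_pos_iff[of a x] count_pos_iff[of Q x] by auto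
        then show ?thesis using True by simp
      next
        case False
        have "y \<notin> simp_letters w" using dQ yQ by auto
        then have "count_list w y \<noteq> 1" unfolding simp_letters_def by simp
        moreover have "y \<in> set w" using yQ w by simp
        ultimately have "2 \<le> count_list w y" using count_ge2_iff[of w y] by simp
        then show ?thesis using w False by simp
      qed
    qed
    have d1: "derives E w (a @ Q @ [x] @ c)" using Gp_rem[OF E xa qm] w by simp
    have "length (a @ Q @ [x] @ c) < length w" using w by simp
    then obtain w' where "derives E (a @ Q @ [x] @ c) w'" "compact w'" using less by blast
    then show ?thesis using derives.trans[OF d1] by blast
  qed
qed

lemma filter_filter_conj: "filter P (filter Q w) = filter (\<lambda>c. P c \<and> Q c) w"
  by (induction w) auto

lemma iso_restr:
  assumes iso: "isoterm M [0,1]" and h: "holds M u v"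
  shows "restr u (simp_letters u) = restr v (simp_letters v)"
proof -
  let ?S = "simp_letters u"
  have S: "simp_letters v = ?S" using iso_simp[OF iso h] by simp
  show ?thesis unfolding S
  proof (rule distinct_pairs_eq)
    show "distinct (restr u ?S)" by (rule distinct_restr_simp)
    show "distinct (restr v ?S)" using distinct_restr_simp[of v] S by simp
    show "\<forall>a b. filter (\<lambda>c. c = a \<or> c = b) (restr u ?S) = filter (\<lambda>c. c = a \<or> c = b) (restr v ?S)"
    proof (intro allI)
      fix a b
      have cu: "\<And>c. c \<in> ?S \<Longrightarrow> count_list u c = 1" unfolding simp_letters_def by simp
      have cv: "\<And>c. c \<in> ?S \<Longrightarrow> count_list v c = 1" using S unfolding simp_letters_def by auto
      have one: "\<And>w c. count_list w c = 1 \<Longrightarrow> filter (\<lambda>d. d = c) w = [c]" by simp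
      have e: "\<And>w. filter (\<lambda>c. c = a \<or> c = b) (restr w ?S) = filter (\<lambda>c. (c = a \<or> c = b) \<and> c \<in> ?S) w"
        unfolding restr_def by (rule filter_filter_conj)
      show "filter (\<lambda>c. c = a \<or> c = b) (restr u ?S) = filter (\<lambda>c. c = a \<or> c = b) (restr v ?S)"
        unfolding e
      proof (cases "a \<in> ?S"; cases "b \<in> ?S")
        assume a: "a \<in> ?S" and b: "b \<in> ?S"
        have "filter (\<lambda>c. (c = a \<or> c = b) \<and> c \<in> ?S) u = filter (\<lambda>c. c = a \<or> c = b) u"
          using a b by (intro filter_cong) auto
        moreover have "filter (\<lambda>c. (c = a \<or> c = b) \<and> c \<in> ?S) v = filter (\<lambda>c. c = a \<or> c = b) v"
          using a b by (intro filter_cong) auto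
        moreover have "filter (\<lambda>c. c = a \<or> c = b) u = filter (\<lambda>c. c = a \<or> c = b) v"
        proof (cases "a = b")
          case True
          then show ?thesis using one[OF cu[OF a]] one[OF cv[OF a]] by simp
        next
          case False
          show ?thesis by (rule iso_order[OF iso h cu[OF a] cu[OF b] False])
        qed
        ultimately show "filter (\<lambda>c. (c = a \<or> c = b) \<and> c \<in> ?S) u = filter (\<lambda>c. (c = a \<or> c = b) \<and> c \<in> ?S) v"
          by simp
      next
        assume a: "a \<in> ?S" and b: "b \<notin> ?S"
        have "filter (\<lambda>c. (c = a \<or> c = b) \<and> c \<in> ?S) u = filter (\<lambda>c. c = a) u"
          using a b by (intro filter_cong) auto
        moreover have "filter (\<lambda>c. (c = a \<or> c = b) \<and> c \<in> ?S) v = filter (\<lambda>c. c = a) v"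
          using a b by (intro filter_cong) auto
        ultimately show "filter (\<lambda>c. (c = a \<or> c = b) \<and> c \<in> ?S) u = filter (\<lambda>c. (c = a \<or> c = b) \<and> c \<in> ?S) v"
          using one[OF cu[OF a]] one[OF cv[OF a]] by simp
      next
        assume a: "a \<notin> ?S" and b: "b \<in> ?S"
        have "filter (\<lambda>c. (c = a \<or> c = b) \<and> c \<in> ?S) u = filter (\<lambda>c. c = b) u"
          using a b by (intro filter_cong) auto
        moreover have "filter (\<lambda>c. (c = a \<or> c = b) \<and> c \<in> ?S) v = filter (\<lambda>c. c = b) v"
          using a b by (intro filter_cong) auto
        ultimately show "filter (\<lambda>c. (c = a \<or> c = b) \<and> c \<in> ?S) u = filter (\<lambda>c. (c = a \<or> c = b) \<and> c \<in> ?S) v"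
          using one[OF cu[OF b]] one[OF cv[OF b]] by simp
      next
        assume a: "a \<notin> ?S" and b: "b \<notin> ?S"
        have "filter (\<lambda>c. (c = a \<or> c = b) \<and> c \<in> ?S) u = []" "filter (\<lambda>c. (c = a \<or> c = b) \<and> c \<in> ?S) v = []"
          using a b by (auto simp: filter_empty_conv)
        then show "filter (\<lambda>c. (c = a \<or> c = b) \<and> c \<in> ?S) u = filter (\<lambda>c. (c = a \<or> c = b) \<and> c \<in> ?S) v"
          by simp
      qed
    qed
  qed
qed




definition cmp :: "word list \<Rightarrow> bool" where
  "cmp bs \<longleftrightarrow> (\<forall>y. 2 \<le> sum_list (cnt bs y) \<longrightarrow> xc (cnt bs y))"

lemma compact_cmp:
  assumes g: "good bs ts" shows "compact (ilv bs ts) \<longleftrightarrow> cmp bs"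
proof -
  have m: "mul_letters (ilv bs ts) = {y. 2 \<le> sum_list (cnt bs y)}"
    using good_mul[OF g] by (simp add: cnt_def)
  have x: "\<And>y. x_compact (ilv bs ts) y = xc (cnt bs y)"
    using x_compact_cnt good_blocks[OF g] by simp
  show ?thesis unfolding compact_def cmp_def m x by simp
qed

lemma cmp_xc:
  assumes "cmp bs" shows "xc (cnt bs y)"
proof (cases "2 \<le> sum_list (cnt bs y)")
  case True then show ?thesis using assms by (simp add: cmp_def)
next
  case False
  show ?thesis unfolding xc_iff
  proof (intro allI impI)
    fix j assume "j < length (cnt bs y)"
    then have "cnt bs y ! j \<le> sum_list (cnt bs y)" by (rule elem_le_sum_list)
    then have "cnt bs y ! j \<le> 1" using False by linarith
    then show "cnt bs y ! j \<le> (if j = fst_idx (cnt bs y) then 2 else 1)" by (cases "j = fst_idx (cnt bs y)") auto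
  qed
qed

lemma adj2:
  assumes sig: "\<forall>(s, t)\<in>Sigma0. holds M s t"
    and gW: "good bsW ts" and gT: "good bsT ts" and tx: "x \<notin> set ts"
    and hWT: "holds M (ilv bsW ts) (ilv bsT ts)"
    and cW: "cmp bsW" and cT: "cmp bsT"
    and cs: "gapfree x bsW \<or> \<not> gapfree x bsT"
  shows "\<exists>bs'. good bs' ts \<and> derives (Sigma0 \<union> Gamma M) (ilv bsW ts) (ilv bs' ts) \<and> cmp bs' \<and>
     cnt bs' x = cnt bsT x \<and> (\<forall>y. y \<noteq> x \<longrightarrow> cnt bs' y = cnt bsW y)"
proof -
  obtain bs' where d: "derives (Sigma0 \<union> Gamma M) (ilv bsW ts) (ilv bs' ts)" and l: "length bs' = length bsW"
    and f: "\<forall>j<length bsW. filter (\<lambda>c. c \<noteq> x) (bs' ! j) = filter (\<lambda>c. c \<noteq> x) (bsW ! j)"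
    and c: "cnt bs' x = cnt bsT x"
    using adjust[OF sig gW gT tx hWT cmp_xc[OF cW] cmp_xc[OF cT] cs] by blast
  have s: "sum_list (cnt bs' x) \<noteq> 1" using c gT by (simp add: good_def cnt_def)
  have g': "good bs' ts" by (rule good_new[OF gW tx l f s])
  have o: "\<forall>y. y \<noteq> x \<longrightarrow> cnt bs' y = cnt bsW y" using cnt_other[OF l f] by blast
  have cm: "cmp bs'" unfolding cmp_def
  proof (intro allI impI)
    fix y assume "2 \<le> sum_list (cnt bs' y)"
    show "xc (cnt bs' y)"
    proof (cases "y = x")
      case True then show ?thesis using c cmp_xc[OF cT] by simp
    next
      case False then show ?thesis using o cmp_xc[OF cW] by simp
    qed
  qed
  show ?thesis using g' d cm c o by blast
qed

lemma step:
  assumes sig: "\<forall>(s, t)\<in>Sigma0. holds M s t"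
    and gU: "good bsU ts" and gV: "good bsV ts" and tx: "x \<notin> set ts"
    and h: "holds M (ilv bsU ts) (ilv bsV ts)"
    and cU: "cmp bsU" and cV: "cmp bsV"
  shows "\<exists>bsU' bsV'. good bsU' ts \<and> good bsV' ts \<and> derives (Sigma0 \<union> Gamma M) (ilv bsU ts) (ilv bsU' ts) \<and>
    derives (Sigma0 \<union> Gamma M) (ilv bsV ts) (ilv bsV' ts) \<and> cmp bsU' \<and> cmp bsV' \<and> cnt bsU' x = cnt bsV' x \<and>
    (\<forall>y. y \<noteq> x \<longrightarrow> cnt bsU' y = cnt bsU y \<and> cnt bsV' y = cnt bsV y)"
proof (cases "gapfree x bsV \<or> \<not> gapfree x bsU")
  case True
  obtain bs' where "good bs' ts" "derives (Sigma0 \<union> Gamma M) (ilv bsV ts) (ilv bs' ts)" "cmp bs'"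
     "cnt bs' x = cnt bsU x" "\<forall>y. y \<noteq> x \<longrightarrow> cnt bs' y = cnt bsV y"
    using adj2[OF sig gV gU tx holds_sym[OF h] cV cU True] by blast
  then show ?thesis using gU cU derives.refl[of "Sigma0 \<union> Gamma M" "ilv bsU ts"]
    by (intro exI[of _ bsU] exI[of _ bs']) auto
next
  case False
  then have c: "gapfree x bsU \<or> \<not> gapfree x bsV" by simp
  obtain bs' where "good bs' ts" "derives (Sigma0 \<union> Gamma M) (ilv bsU ts) (ilv bs' ts)" "cmp bs'"
     "cnt bs' x = cnt bsV x" "\<forall>y. y \<noteq> x \<longrightarrow> cnt bs' y = cnt bsU y"
    using adj2[OF sig gU gV tx h cU cV c] by blast
  then show ?thesis using gV cV derives.refl[of "Sigma0 \<union> Gamma M" "ilv bsV ts"]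
    by (intro exI[of _ bs'] exI[of _ bsV]) auto
qed

lemma iterate:
  assumes sig: "\<forall>(s, t)\<in>Sigma0. holds M s t"
    and gU: "good bsU ts" and gV: "good bsV ts"
    and h: "holds M (ilv bsU ts) (ilv bsV ts)"
    and cU: "cmp bsU" and cV: "cmp bsV"
  shows "(\<forall>x\<in>set xs. x \<notin> set ts) \<Longrightarrow> \<exists>bsU' bsV'. good bsU' ts \<and> good bsV' ts \<and>
    derives (Sigma0 \<union> Gamma M) (ilv bsU ts) (ilv bsU' ts) \<and>
    derives (Sigma0 \<union> Gamma M) (ilv bsV ts) (ilv bsV' ts) \<and> cmp bsU' \<and> cmp bsV' \<and>
    (\<forall>x\<in>set xs. cnt bsU' x = cnt bsV' x)"
proof (induction xs)
  case Nil
  show ?case by (intro exI[of _ bsU] exI[of _ bsV]) (simp add: gU gV cU cV derives.refl)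
next
  case (Cons x xs)
  obtain bsU1 bsV1 where g1: "good bsU1 ts" "good bsV1 ts"
    and d1: "derives (Sigma0 \<union> Gamma M) (ilv bsU ts) (ilv bsU1 ts)" "derives (Sigma0 \<union> Gamma M) (ilv bsV ts) (ilv bsV1 ts)"
    and c1: "cmp bsU1" "cmp bsV1" and e1: "\<forall>y\<in>set xs. cnt bsU1 y = cnt bsV1 y"
    using Cons by auto
  have h1: "holds M (ilv bsU1 ts) (ilv bsV1 ts)"
    using holds_trans[OF holds_sym[OF sound0[OF sig d1(1)]] holds_trans[OF h sound0[OF sig d1(2)]]] .
  have tx: "x \<notin> set ts" using Cons.prems by simp
  obtain bsU2 bsV2 where g2: "good bsU2 ts" "good bsV2 ts"
    and d2: "derives (Sigma0 \<union> Gamma M) (ilv bsU1 ts) (ilv bsU2 ts)" "derives (Sigma0 \<union> Gamma M) (ilv bsV1 ts) (ilv bsV2 ts)"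
    and c2: "cmp bsU2" "cmp bsV2" and ex: "cnt bsU2 x = cnt bsV2 x"
    and o: "\<forall>y. y \<noteq> x \<longrightarrow> cnt bsU2 y = cnt bsU1 y \<and> cnt bsV2 y = cnt bsV1 y"
    using step[OF sig g1 tx h1 c1] by blast
  have "\<forall>y\<in>set (x # xs). cnt bsU2 y = cnt bsV2 y"
  proof
    fix y assume "y \<in> set (x # xs)"
    then show "cnt bsU2 y = cnt bsV2 y"
    proof (cases "y = x")
      case True then show ?thesis using ex by simp
    next
      case False
      then have "y \<in> set xs" using \<open>y \<in> set (x # xs)\<close> by simp
      then show ?thesis using o e1 False by simp
    qed
  qed
  then show ?case using g2 c2 derives.trans[OF d1(1) d2(1)] derives.trans[OF d1(2) d2(2)] by blast
qed

theorem lemma3p4: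
  fixes M :: "'m::monoid_mult itself" and u v :: word
  assumes "isoterm M [0, 1]"
    and "\<forall>(s, t) \<in> Sigma0. holds M s t"
    and "holds M u v"
  shows "\<exists>\<sigma>. holds M (fst \<sigma>) (snd \<sigma>) \<and> compact_id \<sigma> \<and> well_balanced \<sigma> \<and>
           derives ({\<sigma>} \<union> Sigma0 \<union> Gamma M) u v"
proof -
  note iso = assms(1) and sig = assms(2) and h = assms(3)
  let ?EA = "Sigma0 \<union> Gamma M"
  obtain u' where du: "derives ?EA u u'" and cu: "compact u'" using compactify[of ?EA u] by blast
  obtain v' where dv: "derives ?EA v v'" and cv: "compact v'" using compactify[of ?EA v] by blast
  have h': "holds M u' v'"
    using holds_trans[OF holds_sym[OF sound0[OF sig du]] holds_trans[OF h sound0[OF sig dv]]] .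
  let ?S = "simp_letters u'"
  let ?ts = "restr u' ?S"
  have sv: "simp_letters v' = ?S" using iso_simp[OF iso h'] by simp
  have tv: "restr v' (simp_letters v') = ?ts" using iso_restr[OF iso h'] by simp
  let ?bsU = "blocks u'" and ?bsV = "blocks v'"
  have gU: "good ?bsU ?ts" and eU: "ilv ?bsU ?ts = u'" using word_good[of u'] by auto
  have gV: "good ?bsV ?ts" and eV: "ilv ?bsV ?ts = v'" using word_good[of v'] tv by auto
  have cU: "cmp ?bsU" using compact_cmp[OF gU] cu eU by simp
  have cV: "cmp ?bsV" using compact_cmp[OF gV] cv eV by simp
  have stS: "set ?ts = ?S" using good_simp[OF gU] eU by simp
  have fin: "finite (mul_letters u')"
    by (rule finite_subset[of _ "set u'"]) (auto simp: mul_letters_def count_ge2_iff)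
  let ?xs = "sorted_list_of_set (mul_letters u')"
  have sxs: "set ?xs = mul_letters u'" using fin by simp
  have xts: "\<forall>x\<in>set ?xs. x \<notin> set ?ts"
    using sxs stS unfolding mul_letters_def simp_letters_def by auto
  obtain bsU' bsV' where gU': "good bsU' ?ts" and gV': "good bsV' ?ts"
    and dU: "derives ?EA (ilv ?bsU ?ts) (ilv bsU' ?ts)" and dV: "derives ?EA (ilv ?bsV ?ts) (ilv bsV' ?ts)"
    and cU': "cmp bsU'" and cV': "cmp bsV'" and eq: "\<forall>x\<in>set ?xs. cnt bsU' x = cnt bsV' x"
    using iterate[OF sig gU gV _ cU cV xts] h' eU eV by auto
  define U where "U = ilv bsU' ?ts"
  define V where "V = ilv bsV' ?ts"
  have dUU: "derives ?EA u U" unfolding U_def using derives.trans[OF du] dU eU by simp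
  have dVV: "derives ?EA v V" unfolding V_def using derives.trans[OF dv] dV eV by simp
  have hUV: "holds M U V"
    using holds_trans[OF holds_sym[OF sound0[OF sig dUU]] holds_trans[OF h sound0[OF sig dVV]]] .
  have sU: "simp_letters U = set ?ts" unfolding U_def by (rule good_simp[OF gU'])
  have sV: "simp_letters V = set ?ts" unfolding V_def by (rule good_simp[OF gV'])
  have rU: "restr U (simp_letters U) = ?ts" unfolding U_def by (rule good_restr_simp[OF gU'])
  have rV: "restr V (simp_letters V) = ?ts" unfolding V_def by (rule good_restr_simp[OF gV'])
  have cmU: "compact U" unfolding U_def using compact_cmp[OF gU'] cU' by simp
  have cmV: "compact V" unfolding V_def using compact_cmp[OF gV'] cV' by simp
  have hu'U: "holds M u' U" using holds_trans[OF holds_sym[OF sound0[OF sig du]] sound0[OF sig dUU]] .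
  have mU: "mul_letters U = mul_letters u'" using iso_mul[OF iso hu'U] by simp
  have wb: "well_balanced (U, V)"
    unfolding well_balanced_def Let_def
  proof (simp only: fst_conv snd_conv, intro conjI ballI)
    show "restr U (simp_letters U) = restr V (simp_letters V)" using rU rV by simp
  next
    fix x assume "x \<in> mul_letters U"
    then have x: "x \<in> set ?xs" using mU sxs by simp
    then have tx: "x \<notin> set ?ts" using xts by blast
    have "restr U (insert x (set ?ts)) = pat x (cnt bsU' x) ?ts" unfolding U_def by (rule pat_restr[OF gU' tx])
    also have "\<dots> = pat x (cnt bsV' x) ?ts" using eq x by simp
    also have "\<dots> = restr V (insert x (set ?ts))" unfolding V_def by (rule pat_restr[OF gV' tx, symmetric])
    finally show "restr U (insert x (simp_letters U)) = restr V (insert x (simp_letters U))" using sU by simp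
  qed
  have cid: "compact_id (U, V)" unfolding compact_id_def using cmU cmV rU rV by simp
  let ?E = "{(U, V)} \<union> Sigma0 \<union> Gamma M"
  have sub: "?EA \<subseteq> ?E" by auto
  have d: "derives ?E u v"
  proof -
    have a: "derives ?E u U" by (rule derives_mono[OF dUU sub])
    have b: "derives ?E U V" by (rule derives_id) simp
    have c: "derives ?E V v" by (rule derives.sym[OF derives_mono[OF dVV sub]])
    show ?thesis by (rule derives.trans[OF derives.trans[OF a b] c])
  qed
  show ?thesis using hUV cid wb d by (intro exI[of _ "(U, V)"]) simp
qed



end
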